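(* Let $L$ be a restricted Lie superalgebra over $\mathbb{K}$ and $M$ a restricted $L$-module. For every linear map $\psi:L\to M$, one has $d^1_*\psi\in C^2_*(L;M)$ and $d^2_*(d^1_*\psi)=0$; that is, $d^2_{\mathrm{CE}}(d^1_{\mathrm{CE}}\psi)=0$ and $\operatorname{ind}^2\bigl(d^1_{\mathrm{CE}}\psi,\operatorname{ind}^1(\psi)\bigr)=0$. Hence $H^2_*(L;M):=\ker d^2_*/\operatorname{im} d^1_*$ is well defined.
   Context: $\mathbb{K}$ is a field of characteristic $p>2$; Lie superalgebras satisfy $[x,[x,x]]=0$ for odd $x$. A restricted Lie superalgebra has a map $x\mapsto x^{[p]}$ on $L_{\bar0}$ making $L_{\bar0}$ a restricted Lie algebra and with $\mathrm{ad}_{x^{[p]}}(y)=(\mathrm{ad}_x)^p(y)$ for $x\in L_{\bar0},y\in L$. A restricted $L$-module $M$ is a $\mathbb{Z}_2$-graded module with $x^p\cdot m=x^{[p]}\cdot m$ for $x\in L_{\bar0}$ ($x^p$ = acting $p$ times). For homogeneous $\psi\in C^1_{\mathrm{CE}}(L;M)=\mathrm{Hom}_{\mathbb{K}}(L,M)$: $d^1_{\mathrm{CE}}\psi(u,v)=\psi([u,v])-(-1)^{|u||\psi|}u\cdot\psi(v)+(-1)^{|v|(|\psi|+|u|)}v\cdot\psi(u)$, and $\operatorname{ind}^1(\psi):L_{\bar0}\to M$, $\operatorname{ind}^1(\psi)(x)=\psi(x^{[p]})-x^{p-1}\psi(x)$; $d^1_*\psi:=(d^1_{\mathrm{CE}}\psi,\operatorname{ind}^1\psi)$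 (extended additively to non-homogeneous $\psi$). $d^2_{\mathrm{CE}}$ is given by $d^2_{\mathrm{CE}}\varphi(u,v,w)=\varphi([u,v],w)-(-1)^{|v||w|}\varphi([u,w],v)-\varphi(u,[v,w])-(-1)^{|u||\varphi|}u\cdot\varphi(v,w)+(-1)^{|v|(|\varphi|+|u|)}v\cdot\varphi(u,w)-(-1)^{|w|(|\varphi|+|u|+|v|)}w\cdot\varphi(u,v)$. $C^2_*(L;M)$ is the set of pairs $(\varphi,\omega)$, $\varphi$ a super-alternating bilinear map $L\times L\to M$, $\omega:L_{\bar0}\to M$ $\varphi$-compatible, meaning $\omega(\lambda x)=\lambda^p\omega(x)$ and $\omega(x+y)=\omega(x)+\omega(y)+\sum\frac1{\sharp(x)}\varphi([x_1,\dots,x_{p-1}],x_p)+\sum\frac1{\sharp(x)}\sum_{k=1}^{p-2}(-1)^kx_p\cdots x_{p-k+1}\varphi([x_1,\dots,x_{p-k-1}],x_{p-k})$ (sums over $x_i\in\{x,y\}$, $x_1=x,x_2=y$; $\sharp(x)=\#\{k:x_k=x\}$; $[x_1,\dots,x_k]=[[\cdots[x_1,x_2],\dots],x_k]$). For $\varphi$ homogeneous and $\omega$ with values in $M_{|\varphi|}$, $\operatorname{ind}^2(\varphi,\omega)(x,y)=\varphi(x,y^{[p]})-\sum_{i+j=p-1}(-1)^iy^i\varphi([x,y,\dots,y\ (j\text{ times})],y)+(-1)^{|\varphi||x|}x\cdot\omega(y)$ for $x\in L$, $y\in L_{\bar0}$, extended additively via the decomposition $(\varphi,\omega)=(\varphi_{\bar0},\omega_{\bar0})+(\varphi_{\bar1},\omega_{\bar1})$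 ($\omega_{\bar j}$ = $M_{\bar j}$-component). $d^2_*(\varphi,\omega)=(d^2_{\mathrm{CE}}\varphi,\operatorname{ind}^2(\varphi,\omega))$. *)

theory Defs
  imports Complex_Main "HOL-Computational_Algebra.Primes"
begin

text \<open>A Z2-grading is given by a function G :: bool => 'a set, G False = even part,
  G True = odd part. Parities are booleans; addition of parities is (\<noteq>),
  product of parities is (\<and>).\<close>

definition sg :: "bool \<Rightarrow> 'm::ab_group_add \<Rightarrow> 'm" where
  "sg b m = (if b then - m else m)"

definition graded_vs :: "('k::field \<Rightarrow> 'a::ab_group_add \<Rightarrow> 'a) \<Rightarrow> (bool \<Rightarrow> 'a set) \<Rightarrow> bool" where
  "graded_vs s G \<longleftrightarrow> Vector_Spaces.vector_space s \<and>
     (\<forall>b. 0 \<in> G b \<and> (\<forall>x\<in>G b. \<forall>y\<in>G b. x + y \<in> G b) \<and> (\<forall>c. \<forall>x\<in>G b. s c x \<in> G b)) \<and>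
     (\<forall>x. \<exists>a\<in>G False. \<exists>b\<in>G True. x = a + b) \<and> G False \<inter> G True = {0}"

definition gproj :: "(bool \<Rightarrow> 'a::ab_group_add set) \<Rightarrow> bool \<Rightarrow> 'a \<Rightarrow> 'a" where
  "gproj G b x = (THE a. a \<in> G b \<and> x - a \<in> G (\<not> b))"

text \<open>lnb br xs (k-1) = [x_1, ..., x_k] = [[...[x_1,x_2],...],x_k].\<close>
primrec lnb :: "('l \<Rightarrow> 'l \<Rightarrow> 'l) \<Rightarrow> (nat \<Rightarrow> 'l) \<Rightarrow> nat \<Rightarrow> 'l" where
  "lnb br xs 0 = xs 1"
| "lnb br xs (Suc n) = br (lnb br xs n) (xs (Suc (Suc n)))"

text \<open>The sequence x_1 = x, x_2 = y, x_i = x for i in S, x_i = y otherwise (S \<subseteq> {3..p}).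
  Then #(x) = card S + 1.\<close>
definition pseq :: "'l \<Rightarrow> 'l \<Rightarrow> nat set \<Rightarrow> nat \<Rightarrow> 'l" where
  "pseq x y S i = (if i = 1 then x else if i = 2 then y else if i \<in> S then x else y)"

text \<open>acts act xs n k m = x_n (x_{n-1} (... (x_{n-k+1} m))).\<close>
primrec acts :: "('l \<Rightarrow> 'm \<Rightarrow> 'm) \<Rightarrow> (nat \<Rightarrow> 'l) \<Rightarrow> nat \<Rightarrow> nat \<Rightarrow> 'm \<Rightarrow> 'm" where
  "acts act xs n 0 m = m"
| "acts act xs n (Suc k) m = acts act xs n k (act (xs (n - k)) m)"

definition lie_superalgebra ::
  "('k::field \<Rightarrow> 'l::ab_group_add \<Rightarrow> 'l) \<Rightarrow> (bool \<Rightarrow> 'l set) \<Rightarrow> ('l \<Rightarrow> 'l \<Rightarrow> 'l) \<Rightarrow> bool" where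
  "lie_superalgebra sL G br \<longleftrightarrow> graded_vs sL G \<and>
     (\<forall>x y z. br (x + y) z = br x z + br y z \<and> br z (x + y) = br z x + br z y) \<and>
     (\<forall>c x y. br (sL c x) y = sL c (br x y) \<and> br x (sL c y) = sL c (br x y)) \<and>
     (\<forall>a b. \<forall>x\<in>G a. \<forall>y\<in>G b. br x y \<in> G (a \<noteq> b)) \<and>
     (\<forall>a b. \<forall>x\<in>G a. \<forall>y\<in>G b. br x y = - sg (a \<and> b) (br y x)) \<and>
     (\<forall>a b c. \<forall>x\<in>G a. \<forall>y\<in>G b. \<forall>z\<in>G c.
        br x (br y z) = br (br x y) z + sg (a \<and> b) (br y (br x z))) \<and>
     (\<forall>x\<in>G True. br x (br x x) = 0)"

definition restricted_lie_superalgebra ::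
  "nat \<Rightarrow> ('k::field \<Rightarrow> 'l::ab_group_add \<Rightarrow> 'l) \<Rightarrow> (bool \<Rightarrow> 'l set) \<Rightarrow> ('l \<Rightarrow> 'l \<Rightarrow> 'l)
     \<Rightarrow> ('l \<Rightarrow> 'l) \<Rightarrow> bool" where
  "restricted_lie_superalgebra p sL G br pp \<longleftrightarrow> lie_superalgebra sL G br \<and>
     (\<forall>x\<in>G False. pp x \<in> G False) \<and>
     (\<forall>c. \<forall>x\<in>G False. pp (sL c x) = sL (c ^ p) (pp x)) \<and>
     (\<forall>x\<in>G False. \<forall>y\<in>G False. pp (x + y) = pp x + pp y +
        (\<Sum>S\<in>Pow {3..p}. sL (inverse (of_nat (card S + 1))) (lnb br (pseq x y S) (p - 1)))) \<and>
     (\<forall>x\<in>G False. \<forall>y. br (pp x) y = ((\<lambda>z. br x z) ^^ p) y)"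

definition restricted_module ::
  "nat \<Rightarrow> ('k::field \<Rightarrow> 'l::ab_group_add \<Rightarrow> 'l) \<Rightarrow> (bool \<Rightarrow> 'l set) \<Rightarrow> ('l \<Rightarrow> 'l \<Rightarrow> 'l) \<Rightarrow> ('l \<Rightarrow> 'l)
     \<Rightarrow> ('k \<Rightarrow> 'm::ab_group_add \<Rightarrow> 'm) \<Rightarrow> (bool \<Rightarrow> 'm set) \<Rightarrow> ('l \<Rightarrow> 'm \<Rightarrow> 'm) \<Rightarrow> bool" where
  "restricted_module p sL G br pp sM GM act \<longleftrightarrow> graded_vs sM GM \<and>
     (\<forall>x y m. act (x + y) m = act x m + act y m) \<and>
     (\<forall>x m n. act x (m + n) = act x m + act x n) \<and>
     (\<forall>c x m. act (sL c x) m = sM c (act x m) \<and> act x (sM c m) = sM c (act x m)) \<and>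
     (\<forall>a b. \<forall>x\<in>G a. \<forall>m\<in>GM b. act x m \<in> GM (a \<noteq> b)) \<and>
     (\<forall>a b. \<forall>x\<in>G a. \<forall>y\<in>G b. \<forall>m.
        act (br x y) m = act x (act y m) - sg (a \<and> b) (act y (act x m))) \<and>
     (\<forall>x\<in>G False. \<forall>m. (act x ^^ p) m = act (pp x) m)"

text \<open>Component of parity j of a linear map psi : L -> M (maps L_i to M_(i+j)).\<close>
definition cpart1 :: "(bool \<Rightarrow> 'l::ab_group_add set) \<Rightarrow> (bool \<Rightarrow> 'm::ab_group_add set) \<Rightarrow> bool
     \<Rightarrow> ('l \<Rightarrow> 'm) \<Rightarrow> 'l \<Rightarrow> 'm" where
  "cpart1 G GM j psi x = (\<Sum>i\<in>UNIV. gproj GM (i \<noteq> j) (psi (gproj G i x)))"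

definition cpart2 :: "(bool \<Rightarrow> 'l::ab_group_add set) \<Rightarrow> (bool \<Rightarrow> 'm::ab_group_add set) \<Rightarrow> bool
     \<Rightarrow> ('l \<Rightarrow> 'l \<Rightarrow> 'm) \<Rightarrow> 'l \<Rightarrow> 'l \<Rightarrow> 'm" where
  "cpart2 G GM j phi u v =
     (\<Sum>a\<in>UNIV. \<Sum>b\<in>UNIV. gproj GM ((a \<noteq> b) \<noteq> j) (phi (gproj G a u) (gproj G b v)))"

text \<open>d^1_CE for psi of parity j, u of parity a, v of parity b.\<close>
definition dCE1_h :: "('l \<Rightarrow> 'l \<Rightarrow> 'l) \<Rightarrow> ('l \<Rightarrow> 'm::ab_group_add \<Rightarrow> 'm) \<Rightarrow> bool \<Rightarrow> bool \<Rightarrow> bool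
     \<Rightarrow> ('l \<Rightarrow> 'm) \<Rightarrow> 'l \<Rightarrow> 'l \<Rightarrow> 'm" where
  "dCE1_h br act j a b psi u v =
     psi (br u v) - sg (a \<and> j) (act u (psi v)) + sg (b \<and> (j \<noteq> a)) (act v (psi u))"

definition dCE1 :: "(bool \<Rightarrow> 'l::ab_group_add set) \<Rightarrow> ('l \<Rightarrow> 'l \<Rightarrow> 'l) \<Rightarrow> (bool \<Rightarrow> 'm::ab_group_add set)
     \<Rightarrow> ('l \<Rightarrow> 'm \<Rightarrow> 'm) \<Rightarrow> ('l \<Rightarrow> 'm) \<Rightarrow> 'l \<Rightarrow> 'l \<Rightarrow> 'm" where
  "dCE1 G br GM act psi u v =
     (\<Sum>j\<in>UNIV. \<Sum>a\<in>UNIV. \<Sum>b\<in>UNIV.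
        dCE1_h br act j a b (cpart1 G GM j psi) (gproj G a u) (gproj G b v))"

definition ind1 :: "nat \<Rightarrow> ('l \<Rightarrow> 'l) \<Rightarrow> ('l \<Rightarrow> 'm::ab_group_add \<Rightarrow> 'm) \<Rightarrow> ('l \<Rightarrow> 'm) \<Rightarrow> 'l \<Rightarrow> 'm" where
  "ind1 p pp act psi x = psi (pp x) - (act x ^^ (p - 1)) (psi x)"

text \<open>d^2_CE for phi of parity j, arguments of parities a, b, c.\<close>
definition dCE2_h :: "('l \<Rightarrow> 'l \<Rightarrow> 'l) \<Rightarrow> ('l \<Rightarrow> 'm::ab_group_add \<Rightarrow> 'm) \<Rightarrow> bool \<Rightarrow> bool \<Rightarrow> bool \<Rightarrow> bool
     \<Rightarrow> ('l \<Rightarrow> 'l \<Rightarrow> 'm) \<Rightarrow> 'l \<Rightarrow> 'l \<Rightarrow> 'l \<Rightarrow> 'm" where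
  "dCE2_h br act j a b c phi u v w =
     phi (br u v) w - sg (b \<and> c) (phi (br u w) v) - phi u (br v w)
     - sg (a \<and> j) (act u (phi v w))
     + sg (b \<and> (j \<noteq> a)) (act v (phi u w))
     - sg (c \<and> ((j \<noteq> a) \<noteq> b)) (act w (phi u v))"

definition dCE2 :: "(bool \<Rightarrow> 'l::ab_group_add set) \<Rightarrow> ('l \<Rightarrow> 'l \<Rightarrow> 'l) \<Rightarrow> (bool \<Rightarrow> 'm::ab_group_add set)
     \<Rightarrow> ('l \<Rightarrow> 'm \<Rightarrow> 'm) \<Rightarrow> ('l \<Rightarrow> 'l \<Rightarrow> 'm) \<Rightarrow> 'l \<Rightarrow> 'l \<Rightarrow> 'l \<Rightarrow> 'm" where
  "dCE2 G br GM act phi u v w =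
     (\<Sum>j\<in>UNIV. \<Sum>a\<in>UNIV. \<Sum>b\<in>UNIV. \<Sum>c\<in>UNIV.
        dCE2_h br act j a b c (cpart2 G GM j phi) (gproj G a u) (gproj G b v) (gproj G c w))"

definition super_alt_bilinear ::
  "('k::field \<Rightarrow> 'l::ab_group_add \<Rightarrow> 'l) \<Rightarrow> (bool \<Rightarrow> 'l set) \<Rightarrow> ('k \<Rightarrow> 'm::ab_group_add \<Rightarrow> 'm)
     \<Rightarrow> ('l \<Rightarrow> 'l \<Rightarrow> 'm) \<Rightarrow> bool" where
  "super_alt_bilinear sL G sM phi \<longleftrightarrow>
     (\<forall>x y z. phi (x + y) z = phi x z + phi y z \<and> phi z (x + y) = phi z x + phi z y) \<and>
     (\<forall>c x y. phi (sL c x) y = sM c (phi x y) \<and> phi x (sL c y) = sM c (phi x y)) \<and>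
     (\<forall>a b. \<forall>x\<in>G a. \<forall>y\<in>G b. phi x y = - sg (a \<and> b) (phi y x))"

definition compatible ::
  "nat \<Rightarrow> ('k::field \<Rightarrow> 'l::ab_group_add \<Rightarrow> 'l) \<Rightarrow> (bool \<Rightarrow> 'l set) \<Rightarrow> ('l \<Rightarrow> 'l \<Rightarrow> 'l)
     \<Rightarrow> ('k \<Rightarrow> 'm::ab_group_add \<Rightarrow> 'm) \<Rightarrow> ('l \<Rightarrow> 'm \<Rightarrow> 'm) \<Rightarrow> ('l \<Rightarrow> 'l \<Rightarrow> 'm) \<Rightarrow> ('l \<Rightarrow> 'm) \<Rightarrow> bool" where
  "compatible p sL G br sM act phi omega \<longleftrightarrow>
     (\<forall>c. \<forall>x\<in>G False. omega (sL c x) = sM (c ^ p) (omega x)) \<and>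
     (\<forall>x\<in>G False. \<forall>y\<in>G False. omega (x + y) = omega x + omega y
        + (\<Sum>S\<in>Pow {3..p}. sM (inverse (of_nat (card S + 1)))
             (phi (lnb br (pseq x y S) (p - 2)) (pseq x y S p)))
        + (\<Sum>S\<in>Pow {3..p}. sM (inverse (of_nat (card S + 1)))
             (\<Sum>k\<in>{1..p - 2}. sM ((- 1) ^ k)
                (acts act (pseq x y S) p k
                   (phi (lnb br (pseq x y S) (p - k - 2)) (pseq x y S (p - k)))))))"

definition C2star ::
  "nat \<Rightarrow> ('k::field \<Rightarrow> 'l::ab_group_add \<Rightarrow> 'l) \<Rightarrow> (bool \<Rightarrow> 'l set) \<Rightarrow> ('l \<Rightarrow> 'l \<Rightarrow> 'l)
     \<Rightarrow> ('k \<Rightarrow> 'm::ab_group_add \<Rightarrow> 'm) \<Rightarrow> ('l \<Rightarrow> 'm \<Rightarrow> 'm) \<Rightarrow> ('l \<Rightarrow> 'l \<Rightarrow> 'm) \<Rightarrow> ('l \<Rightarrow> 'm) \<Rightarrow> bool" where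
  "C2star p sL G br sM act phi omega \<longleftrightarrow>
     super_alt_bilinear sL G sM phi \<and> compatible p sL G br sM act phi omega"

text \<open>ind^2 for phi of parity j (omega with values in M_j), x of parity a, y in L_0.\<close>
definition ind2_h :: "nat \<Rightarrow> ('l \<Rightarrow> 'l \<Rightarrow> 'l) \<Rightarrow> ('l \<Rightarrow> 'l) \<Rightarrow> ('k::field \<Rightarrow> 'm::ab_group_add \<Rightarrow> 'm)
     \<Rightarrow> ('l \<Rightarrow> 'm \<Rightarrow> 'm) \<Rightarrow> bool \<Rightarrow> bool \<Rightarrow> ('l \<Rightarrow> 'l \<Rightarrow> 'm) \<Rightarrow> ('l \<Rightarrow> 'm) \<Rightarrow> 'l \<Rightarrow> 'l \<Rightarrow> 'm" where
  "ind2_h p br pp sM act j a phi omega x y =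
     phi x (pp y)
     - (\<Sum>i\<in>{..p - 1}. sM ((- 1) ^ i)
          ((act y ^^ i) (phi (((\<lambda>z. br z y) ^^ (p - 1 - i)) x) y)))
     + sg (j \<and> a) (act x (omega y))"

definition ind2 :: "nat \<Rightarrow> (bool \<Rightarrow> 'l::ab_group_add set) \<Rightarrow> ('l \<Rightarrow> 'l \<Rightarrow> 'l) \<Rightarrow> ('l \<Rightarrow> 'l)
     \<Rightarrow> ('k::field \<Rightarrow> 'm::ab_group_add \<Rightarrow> 'm) \<Rightarrow> (bool \<Rightarrow> 'm set) \<Rightarrow> ('l \<Rightarrow> 'm \<Rightarrow> 'm)
     \<Rightarrow> ('l \<Rightarrow> 'l \<Rightarrow> 'm) \<Rightarrow> ('l \<Rightarrow> 'm) \<Rightarrow> 'l \<Rightarrow> 'l \<Rightarrow> 'm" where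
  "ind2 p G br pp sM GM act phi omega x y =
     (\<Sum>j\<in>UNIV. \<Sum>a\<in>UNIV.
        ind2_h p br pp sM act j a (cpart2 G GM j phi) (\<lambda>z. gproj GM j (omega z)) (gproj G a x) y)"

end

theory Submission
  imports Defs "HOL-Computational_Algebra.Formal_Power_Series"
begin


definition com :: "'a::ring \<Rightarrow> 'a \<Rightarrow> 'a" where "com u v = u*v - v*u"

lemma choose_alt_mod:
  assumes "prime p" "k \<le> p - 1"
  shows "(p::int) dvd ((-1)^k * int ((p-1) choose k) - 1)"
  using assms(2)
proof (induction k)
  case 0 then show ?case by simp
next
  case (Suc k)
  have p2: "p \<ge> 2" using assms(1) prime_ge_2_nat by blast
  have pd: "p dvd (p choose Suc k)"
    by (rule dvd_choose_prime) (use Suc.prems p2 assms(1) in auto)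
  have eq: "(p choose Suc k) = ((p-1) choose Suc k) + ((p-1) choose k)"
    using p2 choose_reduce_nat[of p "Suc k"] by simp
  have IH: "(p::int) dvd ((-1)^k * int ((p-1) choose k) - 1)" using Suc by simp
  have "(-1::int)^Suc k * int ((p-1) choose Suc k) - 1
     = (-1)^Suc k * int (p choose Suc k) + ((-1)^k * int ((p-1) choose k) - 1)"
    by (simp add: eq algebra_simps)
  moreover have "(p::int) dvd (-1)^Suc k * int (p choose Suc k)"
    using pd by (simp add: int_dvd_int_iff)
  ultimately show ?case using IH by (metis dvd_add)
qed

definition cb :: "nat \<Rightarrow> nat \<Rightarrow> int" where "cb n k = (-1)^k * int (n choose k)"

lemma cb_Suc: "cb (Suc n) (Suc k) = cb n (Suc k) - cb n k"
  by (simp add: cb_def algebra_simps)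

lemma ad_binom:
  fixes z w :: "'a::ring_1"
  shows "((\<lambda>v. z*v - v*z) ^^ n) w = (\<Sum>k\<le>n. of_int (cb n k) * (z^(n-k) * w * z^k))"
proof (induction n)
  case 0 then show ?case by (simp add: cb_def)
next
  case (Suc n)
  define f where "f k = z^(Suc n - k) * w * z^k" for k
  have oic: "z * (of_int c * y) = of_int c * (z * y)" for c y by (metis mult.assoc mult_of_int_commute)
  have A: "z * (\<Sum>k\<le>n. of_int (cb n k) * (z^(n-k) * w * z^k)) = (\<Sum>k\<le>n. of_int (cb n k) * f k)"
    unfolding sum_distrib_left f_def
    by (intro sum.cong refl) (simp add: Suc_diff_le oic mult.assoc)
  have B: "(\<Sum>k\<le>n. of_int (cb n k) * (z^(n-k) * w * z^k)) * z = (\<Sum>k\<le>n. of_int (cb n k) * f (Suc k))"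
    unfolding sum_distrib_right f_def
    by (intro sum.cong refl) (simp add: mult.assoc power_commutes)
  have A': "(\<Sum>k\<le>n. of_int (cb n k) * f k) = (\<Sum>k\<le>Suc n. of_int (cb n k) * f k)"
    by (simp add: cb_def binomial_eq_0)
  have B': "(\<Sum>k\<le>n. of_int (cb n k) * f (Suc k)) = (\<Sum>k\<le>Suc n. of_int (if k = 0 then 0 else cb n (k - 1)) * f k)"
    by (subst sum.atMost_Suc_shift) simp
  have "((\<lambda>v. z*v - v*z) ^^ Suc n) w = (\<Sum>k\<le>Suc n. of_int (cb n k) * f k) - (\<Sum>k\<le>Suc n. of_int (if k = 0 then 0 else cb n (k - 1)) * f k)"
    by (simp only: funpow.simps comp_def Suc.IH A B A' B')
  also have "\<dots> = (\<Sum>k\<le>Suc n. of_int (cb (Suc n) k) * f k)"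
    unfolding sum_subtractf[symmetric]
    by (intro sum.cong refl) (rename_tac k, case_tac k, simp add: cb_def, simp only: cb_Suc of_int_diff left_diff_distrib, simp)
  finally show ?case by (simp add: f_def)
qed


lemma of_int_cb_char:
  assumes "prime p" "of_nat p = (0::'a::ring_1)" "k \<le> p - 1"
  shows "of_int (cb (p-1) k) = (1::'a)"
proof -
  obtain t where t: "cb (p-1) k - 1 = int p * t" using choose_alt_mod[OF assms(1,3)] unfolding cb_def by (auto elim: dvdE)
  have "of_int (cb (p-1) k) = (of_int (int p * t + 1) :: 'a)" using t by (metis add.commute diff_add_cancel)
  also have "\<dots> = 1" using assms(2) by simp
  finally show ?thesis .
qed

lemma ad_char:
  fixes z w :: "'a::ring_1"
  assumes "prime p" "of_nat p = (0::'a)"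
  shows "((\<lambda>v. z*v - v*z) ^^ (p-1)) w = (\<Sum>k<p. z^k * w * z^(p - 1 - k))"
proof -
  have p2: "p \<ge> 2" using assms(1) prime_ge_2_nat by blast
  have "((\<lambda>v. z*v - v*z) ^^ (p-1)) w = (\<Sum>k\<le>p-1. z^(p-1-k) * w * z^k)"
    unfolding ad_binom using of_int_cb_char[OF assms] by (intro sum.cong) auto
  also have "\<dots> = (\<Sum>k<p. z^(p-1-k) * w * z^k)"
    using p2 by (intro sum.cong) auto
  also have "\<dots> = (\<Sum>k<p. z^k * w * z^(p - 1 - k))"
    by (subst sum.nat_diff_reindex[symmetric]) (intro sum.cong refl, simp add: Suc_diff_Suc diff_diff_cancel less_imp_le_nat)
  finally show ?thesis .
qed

definition jZ :: "'a::ring_1 \<Rightarrow> 'a \<Rightarrow> 'a fps" where "jZ a b = fps_X * fps_const a + fps_const b"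

lemma jZ_Suc: "jZ a b ^ Suc n = jZ a b ^ n * fps_X * fps_const a + jZ a b ^ n * fps_const b"
proof -
  have "jZ a b ^ Suc n = jZ a b ^ n * jZ a b" by (rule power_Suc2)
  also have "\<dots> = jZ a b ^ n * (fps_X * fps_const a + fps_const b)" by (simp only: jZ_def)
  finally show ?thesis by (simp only: distrib_left mult.assoc)
qed

lemma jZ_pow_Suc_nth: "fps_nth (jZ a b ^ Suc n) i = (if i = 0 then 0 else fps_nth (jZ a b ^ n) (i - 1) * a) + fps_nth (jZ a b ^ n) i * b"
  unfolding jZ_Suc by (simp add: fps_X_mult_right_nth del: power_Suc)

lemma jZ_pow_high: "i > n \<Longrightarrow> fps_nth (jZ a b ^ n) i = 0"
proof (induction n arbitrary: i)
  case 0 then show ?case by (simp add: jZ_def)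
next
  case (Suc n) then show ?case by (simp add: jZ_pow_Suc_nth del: power_Suc)
qed

lemma jZ_pow_0: "fps_nth (jZ a b ^ n) 0 = b ^ n"
  by (induction n) (simp_all add: jZ_pow_Suc_nth power_Suc2 jZ_def[symmetric] del: power_Suc, simp add: jZ_def)

lemma jZ_pow_top: "fps_nth (jZ a b ^ n) n = a ^ n"
proof (induction n)
  case 0 then show ?case by (simp add: jZ_def)
next
  case (Suc n) then show ?case by (subst jZ_pow_Suc_nth) (simp add: jZ_pow_high power_Suc2 del: power_Suc)
qed

lemma jZ_pow_sum: "(\<Sum>i\<le>n. fps_nth (jZ a b ^ n) i) = (a + b) ^ n"
proof (induction n)
  case 0 then show ?case by (simp add: jZ_def)
next
  case (Suc n)
  have "(\<Sum>i\<le>Suc n. fps_nth (jZ a b ^ Suc n) i)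
      = (\<Sum>i\<le>Suc n. (if i = 0 then 0 else fps_nth (jZ a b ^ n) (i - 1) * a)) + (\<Sum>i\<le>Suc n. fps_nth (jZ a b ^ n) i * b)"
    by (simp add: jZ_pow_Suc_nth sum.distrib del: power_Suc)
  also have "(\<Sum>i\<le>Suc n. (if i = 0 then 0 else fps_nth (jZ a b ^ n) (i - 1) * a)) = (\<Sum>i\<le>n. fps_nth (jZ a b ^ n) i) * a"
    by (subst sum.atMost_Suc_shift) (simp add: sum_distrib_right)
  also have "(\<Sum>i\<le>Suc n. fps_nth (jZ a b ^ n) i * b) = (\<Sum>i\<le>n. fps_nth (jZ a b ^ n) i) * b"
    by (simp add: jZ_pow_high sum_distrib_right)
  finally show ?case using Suc by (simp add: power_Suc2 distrib_left del: power_Suc)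
qed

lemma jZ_deriv_pow: "fps_deriv (jZ a b ^ n) = (\<Sum>k<n. jZ a b ^ k * fps_const a * jZ a b ^ (n - 1 - k))"
proof (induction n)
  case 0 then show ?case by simp
next
  case (Suc n)
  have d: "fps_deriv (jZ a b) = fps_const a" by (simp add: jZ_def)
  have "fps_deriv (jZ a b ^ Suc n) = jZ a b ^ n * fps_const a + fps_deriv (jZ a b ^ n) * jZ a b"
    by (simp add: power_Suc2 d del: power_Suc)
  also have "fps_deriv (jZ a b ^ n) * jZ a b = (\<Sum>k<n. jZ a b ^ k * fps_const a * jZ a b ^ (Suc n - 1 - k))"
    unfolding Suc sum_distrib_right
    by (intro sum.cong refl) (simp add: mult.assoc Suc_diff_Suc power_Suc2[symmetric] Suc_diff_le)
  finally show ?case by (simp add: add.commute)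
qed

lemma Xc_comm: "f * fps_X ^ k = fps_X ^ k * f"
  by (rule fps_mult_fps_X_power_commute[symmetric])

lemma jZ_ad_term:
  fixes a b v :: "'a::ring_1"
  shows "jZ a b * (fps_X^c * fps_const v) - (fps_X^c * fps_const v) * jZ a b
       = fps_X^(Suc c) * fps_const (a*v - v*a) + fps_X^c * fps_const (b*v - v*b)"
proof -
  have 1: "fps_const u * (fps_X^c * fps_const v) = fps_X^c * fps_const (u*v)" for u :: 'a
    by (metis Xc_comm mult.assoc fps_const_mult)
  have 2: "fps_X^c * fps_const v * fps_X = fps_X^(Suc c) * fps_const v"
    by (metis fps_mult_fps_X_commute mult.assoc power_Suc2)
  have "jZ a b * (fps_X^c * fps_const v) = fps_X^(Suc c) * fps_const (a*v) + fps_X^c * fps_const (b*v)"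
    unfolding jZ_def distrib_right by (simp only: mult.assoc 1) (simp only: mult.assoc[symmetric] power_Suc)
  moreover have "(fps_X^c * fps_const v) * jZ a b = fps_X^(Suc c) * fps_const (v*a) + fps_X^c * fps_const (v*b)"
    unfolding jZ_def distrib_left
    by (simp only: mult.assoc[symmetric] 2) (simp only: mult.assoc fps_const_mult)
  moreover have "fps_const (u - w) = fps_const u - fps_const w" for u w :: 'a by (rule fps_const_sub[symmetric])
  moreover have "(P+Q)-(R+S) = (P-R)+(Q-S)" for P Q R S :: "'a fps" by (simp add: algebra_simps)
  ultimately show ?thesis
    by (simp only: right_diff_distrib)
qed

lemma lnb_cong: "(\<And>i. 1 \<le> i \<Longrightarrow> i \<le> Suc n \<Longrightarrow> xs i = ys i) \<Longrightarrow> lnb br xs n = lnb br ys n"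
  by (induction n) auto

lemma pseq_ins: "i \<noteq> k \<Longrightarrow> pseq x y (insert k S) i = pseq x y S i"
  by (simp add: pseq_def)

lemma pseq_new: "k \<ge> 3 \<Longrightarrow> pseq x y (insert k S) k = x"
  by (simp add: pseq_def)

lemma pseq_out: "k \<ge> 3 \<Longrightarrow> k \<notin> S \<Longrightarrow> pseq x y S k = y"
  by (simp add: pseq_def)

lemma neg1_central: "(x::'a::ring_1) * ((-1)^n * y) = (-1)^n * (x * y)"
  by (cases "even n") auto

lemma neg1_central2: "((-1)^n * y) * (x::'a::ring_1) = (-1)^n * (y * x)"
  by (cases "even n") auto

lemma lnb_ins:
  assumes "S \<subseteq> {3..Suc n}" "n \<ge> 1"
  shows "lnb com (pseq a b (insert (Suc (Suc n)) S)) (Suc n) = com (lnb com (pseq a b S) n) a"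
    and "lnb com (pseq a b S) (Suc n) = com (lnb com (pseq a b S) n) b"
proof -
  have "lnb com (pseq a b (insert (Suc (Suc n)) S)) n = lnb com (pseq a b S) n"
    by (rule lnb_cong) (simp add: pseq_ins)
  then show "lnb com (pseq a b (insert (Suc (Suc n)) S)) (Suc n) = com (lnb com (pseq a b S) n) a"
    using assms(2) by (simp add: pseq_new)
  have "Suc (Suc n) \<notin> S" using assms by auto
  then show "lnb com (pseq a b S) (Suc n) = com (lnb com (pseq a b S) n) b"
    by (simp add: pseq_def)
qed

lemma ad_sum: "(z::'a::ring) * (\<Sum>S\<in>A. f S) - (\<Sum>S\<in>A. f S) * z = (\<Sum>S\<in>A. z * f S - f S * z)"
  by (simp add: sum_distrib_left sum_distrib_right sum_subtractf)

lemma jZ_ad_pow: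
  fixes a b :: "'a::ring_1"
  assumes "n \<ge> 1"
  shows "((\<lambda>v. jZ a b * v - v * jZ a b) ^^ n) (fps_const a)
     = (\<Sum>S\<in>Pow {3..Suc n}. fps_X^(card S) * fps_const ((-1)^n * lnb com (pseq a b S) n))"
  using assms
proof (induction n rule: dec_induct)
  case base
  have "jZ a b * (fps_X^0 * fps_const a) - (fps_X^0 * fps_const a) * jZ a b
       = fps_X^(Suc 0) * fps_const (a*a - a*a) + fps_X^0 * fps_const (b*a - a*b)"
    by (rule jZ_ad_term)
  then have "jZ a b * fps_const a - fps_const a * jZ a b = fps_const (b*a - a*b)" by simp
  moreover have "{3..Suc 1} = {}" by simp
  ultimately show ?case by (simp add: com_def pseq_def)
next
  case (step n)
  define L where "L S = lnb com (pseq a b S) n" for S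
  let ?A = "Pow {3..Suc n}"
  let ?ad = "\<lambda>v. jZ a b * v - v * jZ a b"
  have "(?ad ^^ Suc n) (fps_const a) = ?ad ((?ad ^^ n) (fps_const a))" by simp
  also have "\<dots> = (\<Sum>S\<in>?A. ?ad (fps_X^(card S) * fps_const ((-1)^n * L S)))"
    unfolding step.IH L_def by (rule ad_sum)
  also have "\<dots> = (\<Sum>S\<in>?A. fps_X^(Suc (card S)) * fps_const ((-1)^Suc n * com (L S) a)
                   + fps_X^(card S) * fps_const ((-1)^Suc n * com (L S) b))"
    unfolding jZ_ad_term
    by (intro sum.cong refl) (simp add: neg1_central neg1_central2 com_def algebra_simps)
  also have "\<dots> = (\<Sum>S\<in>?A. fps_X^(card (insert (Suc (Suc n)) S)) * fps_const ((-1)^Suc n * lnb com (pseq a b (insert (Suc (Suc n)) S)) (Suc n)))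
                 + (\<Sum>S\<in>?A. fps_X^(card S) * fps_const ((-1)^Suc n * lnb com (pseq a b S) (Suc n)))"
  proof -
    have "S \<in> ?A \<Longrightarrow> card (insert (Suc (Suc n)) S) = Suc (card S)" for S
      by (subst card_insert_disjoint) (auto intro: finite_subset)
    then show ?thesis
      unfolding sum.distrib L_def using step.hyps(1)
      by (intro arg_cong2[where f=plus] sum.cong refl) (simp_all add: lnb_ins del: power_Suc lnb.simps)
  qed
  also have "\<dots> = (\<Sum>S\<in>Pow {3..Suc (Suc n)}. fps_X^(card S) * fps_const ((-1)^Suc n * lnb com (pseq a b S) (Suc n)))"
  proof -
    have eq: "{3..Suc (Suc n)} = insert (Suc (Suc n)) {3..Suc n}"
      using step.hyps by (intro atLeastAtMostSuc_conv) simp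
    have inj: "inj_on (insert (Suc (Suc n))) ?A"
    proof (rule inj_onI)
      fix x y assume xy: "x \<in> ?A" "y \<in> ?A" "insert (Suc (Suc n)) x = insert (Suc (Suc n)) y"
      then have "Suc (Suc n) \<notin> x" "Suc (Suc n) \<notin> y" by auto
      then show "x = y" using xy(3) by (metis Diff_insert_absorb)
    qed
    have disj: "?A \<inter> insert (Suc (Suc n)) ` ?A = {}" by auto
    show ?thesis
      unfolding eq Pow_insert
      by (subst sum.union_disjoint) (auto simp: disj sum.reindex[OF inj] add.commute)
  qed
  finally show ?case .
qed

lemma jacobson_sum:
  fixes a b :: "'a::ring_1"
  assumes "p \<ge> 2"
  shows "(a+b)^p = a^p + b^p + (\<Sum>i\<in>{1..p-1}. fps_nth (jZ a b ^ p) i)"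
proof -
  have "{..p} = insert 0 (insert p {1..p-1})" using assms by auto
  then have "(\<Sum>i\<le>p. fps_nth (jZ a b ^ p) i) = fps_nth (jZ a b ^ p) 0 + (fps_nth (jZ a b ^ p) p + (\<Sum>i\<in>{1..p-1}. fps_nth (jZ a b ^ p) i))"
    using assms by (simp add: sum.insert_if)
  then show ?thesis using jZ_pow_sum[of a b p] by (simp add: jZ_pow_0 jZ_pow_top algebra_simps)
qed

lemma jacobson_coeff:
  fixes a b :: "'a::ring_1"
  assumes "prime p" "p > 2" "of_nat p = (0::'a)" "i \<ge> 1"
  shows "of_nat i * fps_nth (jZ a b ^ p) i = (\<Sum>S\<in>{S\<in>Pow {3..p}. card S = i - 1}. lnb com (pseq a b S) (p-1))"
proof -
  have oddp: "odd p" using assms(1,2) prime_odd_nat by auto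
  have p0: "of_nat p = (0::'a fps)" using assms(3) by (simp flip: fps_of_nat)
  have "of_nat i * fps_nth (jZ a b ^ p) i = fps_nth (fps_deriv (jZ a b ^ p)) (i - 1)"
    using assms(4) by simp
  also have "fps_deriv (jZ a b ^ p) = ((\<lambda>v. jZ a b * v - v * jZ a b) ^^ (p-1)) (fps_const a)"
    unfolding jZ_deriv_pow ad_char[OF assms(1) p0] ..
  also have "\<dots> = (\<Sum>S\<in>Pow {3..p}. fps_X^(card S) * fps_const ((-1)^(p-1) * lnb com (pseq a b S) (p-1)))"
    using jZ_ad_pow[of "p-1" a b] assms(2) by simp
  also have "(-1)^(p-1) = (1::'a)" using oddp by simp
  finally have "of_nat i * fps_nth (jZ a b ^ p) i = (\<Sum>S\<in>Pow {3..p}. fps_nth (fps_X^(card S) * fps_const (lnb com (pseq a b S) (p-1))) (i - 1))"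
    by (simp add: fps_sum_nth)
  also have "\<dots> = (\<Sum>S\<in>Pow {3..p}. if card S = i - 1 then lnb com (pseq a b S) (p-1) else 0)"
    by (intro sum.cong refl) (auto simp: fps_X_power_mult_nth)
  also have "\<dots> = (\<Sum>S\<in>{S\<in>Pow {3..p}. card S = i - 1}. lnb com (pseq a b S) (p-1))"
    by (rule sum.inter_filter[symmetric]) simp
  finally show ?thesis .
qed

definition ee :: "nat \<Rightarrow> nat \<Rightarrow> int" where "ee n l = (-1)^l * int (Suc n choose l)"

lemma ee_Suc: "ee (Suc n) (Suc l) = ee n (Suc l) - ee n l"
  by (simp add: ee_def algebra_simps)

lemma oi_central: "(z::'a::ring_1) * (of_int c * w) = of_int c * (z * w)"
  by (metis mult.assoc mult_of_int_commute)

lemma S2_ring: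
  fixes x y :: "'a::ring_1"
  assumes "prime p" "of_nat p = (0::'a)"
  shows "(\<Sum>i<p. (-1)^i * (y^i * ((\<lambda>w. w*y - y*w)^^(p-1-i)) x)) = x * y^(p-1)"
proof -
  define D where "D w = w*y - y*w" for w
  have Dadd: "D (u + v) = D u + D v" for u v unfolding D_def by (simp add: algebra_simps)
  have Ddiff: "D (u - v) = D u - D v" for u v unfolding D_def by (simp add: algebra_simps)
  have Dsum: "D (sum f A) = (\<Sum>i\<in>A. D (f i))" for f :: "nat \<Rightarrow> 'a" and A
    by (induction A rule: infinite_finite_induct) (simp_all add: Dadd[unfolded D_def] D_def)
  have Dint: "D (of_int c * w) = of_int c * D w" for c w
    unfolding D_def by (simp add: right_diff_distrib mult.assoc oi_central)
  have Dypow: "D (y^i * w) = y^i * D w" for i w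
  proof -
    have "y * (y^i * w) = y^i * (y*w)" by (metis mult.assoc power_commutes)
    then show ?thesis unfolding D_def by (simp add: right_diff_distrib mult.assoc)
  qed
  have m1: "((-1)^i :: 'a) = of_int ((-1)^i)" for i by simp
  define Sn where "Sn n = (\<Sum>i\<le>n. (-1)^i * (y^i * (D^^(n-i)) x))" for n
  define Q where "Q n = (\<Sum>l\<le>n. of_int (ee n l) * (y^l * x * y^(n-l)))" for n
  have S_rec: "Sn (Suc n) = D (Sn n) + (-1)^(Suc n) * (y^(Suc n) * x)" for n
  proof -
    have "Sn (Suc n) = (\<Sum>i\<le>n. (-1)^i * (y^i * (D^^(Suc n-i)) x)) + (-1)^(Suc n) * (y^(Suc n) * x)"
      unfolding Sn_def by simp
    also have "(\<Sum>i\<le>n. (-1)^i * (y^i * (D^^(Suc n-i)) x)) = D (Sn n)"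
      unfolding Sn_def Dsum m1 Dint Dypow by (intro sum.cong refl) (simp add: Suc_diff_le)
    finally show ?thesis .
  qed
  have Q_rec: "Q (Suc n) = D (Q n) + (-1)^(Suc n) * (y^(Suc n) * x)" for n
  proof -
    define g where "g l = y^l * x * y^(Suc n - l)" for l
    have Dterm: "l \<le> n \<Longrightarrow> D (y^l * x * y^(n-l)) = g l - g (Suc l)" for l
      unfolding D_def g_def
      by (simp add: mult.assoc power_commutes Suc_diff_le flip: power_Suc power_Suc2) (simp add: mult.assoc[symmetric])
    have "D (Q n) = (\<Sum>l\<le>n. of_int (ee n l) * g l) - (\<Sum>l\<le>n. of_int (ee n l) * g (Suc l))"
      unfolding Q_def Dsum Dint sum_subtractf[symmetric]
      by (intro sum.cong refl) (simp add: Dterm right_diff_distrib)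
    also have "(\<Sum>l\<le>n. of_int (ee n l) * g l) = (\<Sum>l\<le>Suc n. of_int (ee n l) * g l) - (-1)^(Suc n) * (y^(Suc n) * x)"
      by (simp add: ee_def g_def)
    also have "(\<Sum>l\<le>n. of_int (ee n l) * g (Suc l)) = (\<Sum>l\<le>Suc n. of_int (if l = 0 then 0 else ee n (l - 1)) * g l)"
      by (subst sum.atMost_Suc_shift) simp
    finally have "D (Q n) = (\<Sum>l\<le>Suc n. of_int (ee n l) * g l) - (\<Sum>l\<le>Suc n. of_int (if l = 0 then 0 else ee n (l - 1)) * g l)
        - (-1)^(Suc n) * (y^(Suc n) * x)" by (simp add: algebra_simps)
    also have "(\<Sum>l\<le>Suc n. of_int (ee n l) * g l) - (\<Sum>l\<le>Suc n. of_int (if l = 0 then 0 else ee n (l - 1)) * g l) = Q (Suc n)"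
      unfolding Q_def g_def sum_subtractf[symmetric]
      by (intro sum.cong refl) (rename_tac k, case_tac k, simp add: ee_def, simp only: ee_Suc of_int_diff left_diff_distrib, simp)
    finally show ?thesis by simp
  qed
  have SQ: "Sn n = Q n" for n
  proof (induction n)
    case 0 then show ?case by (simp add: Sn_def Q_def ee_def)
  next
    case (Suc n) then show ?case by (simp only: S_rec Q_rec)
  qed
  have p2: "p \<ge> 2" using assms(1) prime_ge_2_nat by blast
  have "Q (p-1) = (\<Sum>l\<le>p-1. if l = 0 then x * y^(p-1) else 0)"
    unfolding Q_def
  proof (intro sum.cong refl)
    fix l assume l: "l \<in> {..p-1}"
    show "of_int (ee (p-1) l) * (y^l * x * y^(p-1-l)) = (if l = 0 then x * y^(p-1) else 0)"
    proof (cases "l = 0")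
      case True then show ?thesis by (simp add: ee_def)
    next
      case False
      have "p dvd (p choose l)" by (rule dvd_choose_prime) (use False l p2 assms(1) in auto)
      then obtain t where t: "p choose l = p * t" by (auto elim: dvdE)
      have "(of_int (ee (p-1) l) :: 'a) = of_nat p * (of_nat t * (-1)^l)"
        unfolding ee_def using p2 t by (simp add: Suc_diff_1 algebra_simps)
      then show ?thesis using False assms(2) by simp
    qed
  qed
  also have "\<dots> = x * y^(p-1)" by simp
  finally have Qp: "Q (p-1) = x * y^(p-1)" .
  have "(\<Sum>i<p. (-1)^i * (y^i * ((\<lambda>w. w*y - y*w)^^(p-1-i)) x)) = Sn (p-1)"
    unfolding Sn_def D_def[abs_def] using p2 by (intro sum.cong) auto
  then show ?thesis using SQ Qp by simp
qed


lemma gvs_vs: "graded_vs s G \<Longrightarrow> Vector_Spaces.vector_space s" by (simp add: graded_vs_def)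

lemma gvs_zero: "graded_vs s G \<Longrightarrow> 0 \<in> G b" by (simp add: graded_vs_def)
lemma gvs_add: "graded_vs s G \<Longrightarrow> x \<in> G b \<Longrightarrow> y \<in> G b \<Longrightarrow> x + y \<in> G b" by (simp add: graded_vs_def)
lemma gvs_scale: "graded_vs s G \<Longrightarrow> x \<in> G b \<Longrightarrow> s c x \<in> G b" by (simp add: graded_vs_def)

lemma gvs_neg:
  assumes "graded_vs s G" "x \<in> G b" shows "- x \<in> G b"
proof -
  interpret vector_space s using gvs_vs[OF assms(1)] .
  have "s (-1) x = - x" by (simp add: scale_minus_left)
  then show ?thesis using gvs_scale[OF assms, of "-1"] by simp
qed

lemma gvs_diff: "graded_vs s G \<Longrightarrow> x \<in> G b \<Longrightarrow> y \<in> G b \<Longrightarrow> x - y \<in> G b"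
  using gvs_add[of s G "x" b "- y"] gvs_neg[of s G y b] by simp

lemma gvs_sum: "graded_vs s G \<Longrightarrow> (\<And>i. i \<in> A \<Longrightarrow> f i \<in> G b) \<Longrightarrow> sum f A \<in> G b"
  by (induction A rule: infinite_finite_induct) (auto intro: gvs_add gvs_zero)

lemma gvs_inter: "graded_vs s G \<Longrightarrow> x \<in> G b \<Longrightarrow> x \<in> G (\<not> b) \<Longrightarrow> x = 0"
  unfolding graded_vs_def by (cases b) auto

lemma gp_ex: assumes "graded_vs s G" shows "\<exists>a. a \<in> G b \<and> x - a \<in> G (\<not> b)"
proof -
  obtain a0 a1 where a: "a0 \<in> G False" "a1 \<in> G True" "x = a0 + a1" using assms unfolding graded_vs_def by blast
  show ?thesis by (cases b) (use a in auto)
qed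

lemma gp_uniq:
  assumes "graded_vs s G" "a \<in> G b" "x - a \<in> G (\<not> b)" "a' \<in> G b" "x - a' \<in> G (\<not> b)"
  shows "a = a'"
proof -
  have "a - a' \<in> G b" using assms gvs_diff by blast
  moreover have "a - a' = (x - a') - (x - a)" by simp
  then have "a - a' \<in> G (\<not> b)" using assms gvs_diff by metis
  ultimately show ?thesis using gvs_inter[OF assms(1)] by fastforce
qed

lemma gp_prop: assumes "graded_vs s G" shows "gproj G b x \<in> G b \<and> x - gproj G b x \<in> G (\<not> b)"
proof -
  have "\<exists>!a. a \<in> G b \<and> x - a \<in> G (\<not> b)" using gp_ex[OF assms, of b x] gp_uniq[OF assms] by blast
  then show ?thesis unfolding gproj_def by (rule theI')
qed

lemma gp_mem: "graded_vs s G \<Longrightarrow> gproj G b x \<in> G b" using gp_prop by blast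

lemma gp_eqI: "graded_vs s G \<Longrightarrow> a \<in> G b \<Longrightarrow> x - a \<in> G (\<not> b) \<Longrightarrow> gproj G b x = a"
  using gp_prop gp_uniq by metis

lemma gp_hom: "graded_vs s G \<Longrightarrow> x \<in> G b \<Longrightarrow> gproj G b x = x"
  by (rule gp_eqI) (auto intro: gvs_zero)

lemma gp_other: "graded_vs s G \<Longrightarrow> x \<in> G b \<Longrightarrow> gproj G (\<not> b) x = 0"
  by (rule gp_eqI) (auto intro: gvs_zero)

lemma gp_other': "graded_vs s G \<Longrightarrow> x \<in> G b \<Longrightarrow> b' \<noteq> b \<Longrightarrow> gproj G b' x = 0"
  using gp_other[of s G x b] by (cases b; cases b') auto

lemma gp_hom_if: "graded_vs s G \<Longrightarrow> x \<in> G b \<Longrightarrow> gproj G b' x = (if b' = b then x else 0)"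
  using gp_hom[of s G x b] gp_other'[of s G x b b'] by auto

lemma gp_sum_F_T: assumes "graded_vs s G" shows "gproj G False x + gproj G True x = x"
proof -
  have "gproj G True x = x - gproj G False x"
    using gp_prop[OF assms, of False x] by (intro gp_eqI[OF assms]) auto
  then show ?thesis by simp
qed

lemma gp_sum_UNIV: "graded_vs s G \<Longrightarrow> (\<Sum>b\<in>UNIV. gproj G b x) = x"
  using gp_sum_F_T[of s G x] by (simp add: UNIV_bool add.commute)

lemma gp_add: assumes "graded_vs s G" shows "gproj G b (x + y) = gproj G b x + gproj G b y"
proof (rule gp_eqI[OF assms])
  show "gproj G b x + gproj G b y \<in> G b" using gp_mem[OF assms] gvs_add[OF assms] by blast
  have "x + y - (gproj G b x + gproj G b y) = (x - gproj G b x) + (y - gproj G b y)" by simp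
  then show "x + y - (gproj G b x + gproj G b y) \<in> G (\<not> b)" using gp_prop[OF assms] gvs_add[OF assms] by metis
qed

lemma gp_zero: "graded_vs s G \<Longrightarrow> gproj G b 0 = 0"
  using gp_hom gvs_zero by blast

lemma gp_neg: "graded_vs s G \<Longrightarrow> gproj G b (- x) = - gproj G b x"
  using gp_add[of s G b x "- x"] gp_zero[of s G b] by (simp add: eq_neg_iff_add_eq_0 add.commute)

lemma gp_diff: "graded_vs s G \<Longrightarrow> gproj G b (x - y) = gproj G b x - gproj G b y"
  using gp_add[of s G b x "- y"] gp_neg[of s G b y] by simp

lemma gp_sum': "graded_vs s G \<Longrightarrow> gproj G b (sum f A) = (\<Sum>i\<in>A. gproj G b (f i))"
  by (induction A rule: infinite_finite_induct) (auto simp: gp_zero gp_add)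

lemma gp_scale: assumes "graded_vs s G" shows "gproj G b (s c x) = s c (gproj G b x)"
proof (rule gp_eqI[OF assms])
  interpret vector_space s using gvs_vs[OF assms] .
  show "s c (gproj G b x) \<in> G b" using gp_mem[OF assms] gvs_scale[OF assms] by blast
  have "s c x - s c (gproj G b x) = s c (x - gproj G b x)" by (simp add: scale_right_diff_distrib)
  then show "s c x - s c (gproj G b x) \<in> G (\<not> b)" using gp_prop[OF assms] gvs_scale[OF assms] by metis
qed

lemma gp_gp: "graded_vs s G \<Longrightarrow> gproj G b (gproj G b x) = gproj G b x"
  using gp_hom gp_mem by blast

lemma gp_gp': "graded_vs s G \<Longrightarrow> b' \<noteq> b \<Longrightarrow> gproj G b' (gproj G b x) = 0"
  using gp_other' gp_mem by blast


lemma sg_simps[simp]: "sg False m = m" "sg True m = - m" by (simp_all add: sg_def)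

locale RS =
  fixes p :: nat
    and sL :: "'k::field \<Rightarrow> 'l::ab_group_add \<Rightarrow> 'l" and G :: "bool \<Rightarrow> 'l set"
    and br :: "'l \<Rightarrow> 'l \<Rightarrow> 'l" and pp :: "'l \<Rightarrow> 'l"
    and sM :: "'k \<Rightarrow> 'm::ab_group_add \<Rightarrow> 'm" and GM :: "bool \<Rightarrow> 'm set"
    and act :: "'l \<Rightarrow> 'm \<Rightarrow> 'm" and psi :: "'l \<Rightarrow> 'm"
  assumes char: "CHAR('k) = p" and prime: "prime p" and p2: "p > 2"
    and RL: "restricted_lie_superalgebra p sL G br pp"
    and RM: "restricted_module p sL G br pp sM GM act"
    and lin: "Vector_Spaces.linear sL sM psi"
begin

lemma LS: "lie_superalgebra sL G br" using RL by (simp add: restricted_lie_superalgebra_def)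
lemma gL: "graded_vs sL G" using RL by (simp add: restricted_lie_superalgebra_def lie_superalgebra_def)
lemma gM: "graded_vs sM GM" using RM by (simp add: restricted_module_def)

lemma mL: "module sL" using gvs_vs[OF gL] by (simp add: module_iff_vector_space)
lemma mM: "module sM" using gvs_vs[OF gM] by (simp add: module_iff_vector_space)

lemma br_add1: "br (x + y) z = br x z + br y z"
  using RL by (simp add: restricted_lie_superalgebra_def lie_superalgebra_def)

lemma br_add2: "br z (x + y) = br z x + br z y"
  using RL by (simp add: restricted_lie_superalgebra_def lie_superalgebra_def)

lemma br_scale1: "br (sL c x) y = sL c (br x y)"
  using RL by (simp add: restricted_lie_superalgebra_def lie_superalgebra_def)

lemma br_scale2: "br x (sL c y) = sL c (br x y)"
  using RL by (simp add: restricted_lie_superalgebra_def lie_superalgebra_def)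


lemma br_grade: "x \<in> G a \<Longrightarrow> y \<in> G b \<Longrightarrow> br x y \<in> G (a \<noteq> b)"
  using LS unfolding lie_superalgebra_def by blast

lemma br_anti: "x \<in> G a \<Longrightarrow> y \<in> G b \<Longrightarrow> br x y = - sg (a \<and> b) (br y x)"
  using LS unfolding lie_superalgebra_def by blast

lemma br_jac: "x \<in> G a \<Longrightarrow> y \<in> G b \<Longrightarrow> z \<in> G c \<Longrightarrow> br x (br y z) = br (br x y) z + sg (a \<and> b) (br y (br x z))"
  using LS unfolding lie_superalgebra_def by blast


lemma pp_mem: "x \<in> G False \<Longrightarrow> pp x \<in> G False"
  using RL unfolding restricted_lie_superalgebra_def by blast

lemma pp_scale: "x \<in> G False \<Longrightarrow> pp (sL c x) = sL (c ^ p) (pp x)"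
  using RL unfolding restricted_lie_superalgebra_def by blast

lemma pp_add: "x \<in> G False \<Longrightarrow> y \<in> G False \<Longrightarrow> pp (x + y) = pp x + pp y +
        (\<Sum>S\<in>Pow {3..p}. sL (inverse (of_nat (card S + 1))) (lnb br (pseq x y S) (p - 1)))"
  using RL unfolding restricted_lie_superalgebra_def by blast

lemma pp_ad: "x \<in> G False \<Longrightarrow> br (pp x) y = ((\<lambda>z. br x z) ^^ p) y"
  using RL unfolding restricted_lie_superalgebra_def by blast


lemma act_add1: "act (x + y) m = act x m + act y m"
  using RM unfolding restricted_module_def by blast

lemma act_add2: "act x (m + n) = act x m + act x n"
  using RM unfolding restricted_module_def by blast

lemma act_scale1: "act (sL c x) m = sM c (act x m)"
  using RM unfolding restricted_module_def by blast

lemma act_scale2: "act x (sM c m) = sM c (act x m)"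
  using RM unfolding restricted_module_def by blast


lemma act_grade: "x \<in> G a \<Longrightarrow> m \<in> GM b \<Longrightarrow> act x m \<in> GM (a \<noteq> b)"
  using RM unfolding restricted_module_def by blast

lemma act_br: "x \<in> G a \<Longrightarrow> y \<in> G b \<Longrightarrow> act (br x y) m = act x (act y m) - sg (a \<and> b) (act y (act x m))"
  using RM unfolding restricted_module_def by blast

lemma act_pp: "x \<in> G False \<Longrightarrow> (act x ^^ p) m = act (pp x) m"
  using RM unfolding restricted_module_def by blast


lemma psi_add: "psi (x + y) = psi x + psi y" using lin by (simp add: Vector_Spaces.linear_iff)
lemma psi_scale: "psi (sL c x) = sM c (psi x)" using lin by (simp add: Vector_Spaces.linear_iff)

lemma br_zero1[simp]: "br 0 y = 0" using br_add1[of 0 0 y] by simp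
lemma br_zero2[simp]: "br x 0 = 0" using br_add2[of x 0 0] by simp
lemma br_neg1: "br (- x) y = - br x y" using br_add1[of x "- x" y] by (simp add: eq_neg_iff_add_eq_0 add.commute)
lemma br_neg2: "br y (- x) = - br y x" using br_add2[of y x "- x"] by (simp add: eq_neg_iff_add_eq_0 add.commute)
lemma br_diff1: "br (x - z) y = br x y - br z y" using br_add1[of x "- z" y] br_neg1 by simp
lemma br_diff2: "br y (x - z) = br y x - br y z" using br_add2[of y x "- z"] br_neg2 by simp
lemma act_zero1[simp]: "act 0 m = 0" using act_add1[of 0 0 m] by simp
lemma act_zero2[simp]: "act x 0 = 0" using act_add2[of x 0 0] by simp
lemma act_neg1: "act (- x) m = - act x m" using act_add1[of x "- x" m] by (simp add: eq_neg_iff_add_eq_0 add.commute)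
lemma act_neg2: "act x (- m) = - act x m" using act_add2[of x m "- m"] by (simp add: eq_neg_iff_add_eq_0 add.commute)
lemma act_diff1: "act (x - y) m = act x m - act y m" using act_add1[of x "- y" m] act_neg1 by simp
lemma act_diff2: "act x (m - n) = act x m - act x n" using act_add2[of x m "- n"] act_neg2 by simp
lemma psi_zero[simp]: "psi 0 = 0" using psi_add[of 0 0] by simp
lemma psi_neg: "psi (- x) = - psi x" using psi_add[of x "- x"] by (simp add: eq_neg_iff_add_eq_0 add.commute)
lemma psi_diff: "psi (x - y) = psi x - psi y" using psi_add[of x "- y"] psi_neg by simp
lemma act_sg2: "act x (sg b m) = sg b (act x m)" by (cases b) (simp_all add: act_neg2)
lemma act_sum2: "act x (sum f A) = (\<Sum>i\<in>A. act x (f i))"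
  by (induction A rule: infinite_finite_induct) (auto simp: act_add2)
lemma act_sum1: "act (sum f A) m = (\<Sum>i\<in>A. act (f i) m)"
  by (induction A rule: infinite_finite_induct) (auto simp: act_add1)
lemma psi_sum: "psi (sum f A) = (\<Sum>i\<in>A. psi (f i))"
  by (induction A rule: infinite_finite_induct) (auto simp: psi_add)
lemma br_sum2: "br x (sum f A) = (\<Sum>i\<in>A. br x (f i))"
  by (induction A rule: infinite_finite_induct) (auto simp: br_add2)
lemma br_sum1: "br (sum f A) y = (\<Sum>i\<in>A. br (f i) y)"
  by (induction A rule: infinite_finite_induct) (auto simp: br_add1)

lemma sgM_mem: "m \<in> GM b \<Longrightarrow> sg c m \<in> GM b" by (cases c) (auto intro: gvs_neg[OF gM])

end


context RS begin

abbreviation "ps j \<equiv> cpart1 G GM j psi"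
abbreviation "phi \<equiv> dCE1 G br GM act psi"
abbreviation "dh j a b u v \<equiv> dCE1_h br act j a b (ps j) u v"

lemma sum_bool: "(\<Sum>b\<in>UNIV. f b) = f False + f True" by (simp add: UNIV_bool add.commute)

lemma cp1_hom: "x \<in> G i \<Longrightarrow> ps j x = gproj GM (i \<noteq> j) (psi x)"
  unfolding cpart1_def sum_bool
  by (cases i) (simp_all add: gp_hom[OF gL] gp_other[OF gL] gp_zero[OF gM] gp_other'[OF gL])

lemma cp1_mem: "x \<in> G i \<Longrightarrow> ps j x \<in> GM (i \<noteq> j)"
  using cp1_hom gp_mem[OF gM] by simp

lemma cp1_add: "ps j (x + y) = ps j x + ps j y"
  unfolding cpart1_def by (simp add: gp_add[OF gL] gp_add[OF gM] psi_add sum.distrib)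

lemma cp1_zero[simp]: "ps j 0 = 0" using cp1_add[of j 0 0] by simp
lemma cp1_neg: "ps j (- x) = - ps j x" using cp1_add[of j x "- x"] by (simp add: eq_neg_iff_add_eq_0 add.commute)
lemma cp1_diff: "ps j (x - y) = ps j x - ps j y" using cp1_add[of j x "- y"] cp1_neg by simp
lemma cp1_scale: "ps j (sL c x) = sM c (ps j x)"
  unfolding cpart1_def by (simp add: gp_scale[OF gL] gp_scale[OF gM] psi_scale module.scale_sum_right[OF mM])
lemma cp1_sum: "ps j (sum f A) = (\<Sum>i\<in>A. ps j (f i))"
  by (induction A rule: infinite_finite_induct) (auto simp: cp1_add)

lemma cp1_sumj: "ps False x + ps True x = psi x"
proof -
  define x0 where "x0 = gproj G False x"
  define x1 where "x1 = gproj G True x"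
  have e: "gproj GM False (psi v) + gproj GM True (psi v) = psi v" for v
    using gp_sum_F_T[OF gM] by metis
  have "ps False x + ps True x = (gproj GM False (psi x0) + gproj GM True (psi x0)) + (gproj GM False (psi x1) + gproj GM True (psi x1))"
    unfolding cpart1_def sum_bool x0_def x1_def by (simp add: add_ac)
  also have "\<dots> = psi x0 + psi x1" by (simp only: e)
  also have "\<dots> = psi x" unfolding x0_def x1_def psi_add[symmetric] gp_sum_F_T[OF gL] ..
  finally show ?thesis .
qed

lemma cp1_even: "x \<in> G False \<Longrightarrow> ps j x = gproj GM j (psi x)"
  using cp1_hom by simp

lemma dh_zero1[simp]: "dh j a b 0 v = 0" by (simp add: dCE1_h_def sg_def)
lemma dh_zero2[simp]: "dh j a b u 0 = 0" by (simp add: dCE1_h_def sg_def)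

lemma dh_mem: "u \<in> G a \<Longrightarrow> v \<in> G b \<Longrightarrow> dh j a b u v \<in> GM ((a \<noteq> b) \<noteq> j)"
proof -
  assume u: "u \<in> G a" and v: "v \<in> G b"
  have 1: "ps j (br u v) \<in> GM ((a \<noteq> b) \<noteq> j)" using cp1_mem br_grade[OF u v] by blast
  have 2: "act u (ps j v) \<in> GM ((a \<noteq> b) \<noteq> j)" using act_grade[OF u cp1_mem[OF v, of j]] by (cases a; cases b; cases j) auto
  have 3: "act v (ps j u) \<in> GM ((a \<noteq> b) \<noteq> j)" using act_grade[OF v cp1_mem[OF u, of j]] by (cases a; cases b; cases j) auto
  show ?thesis unfolding dCE1_h_def
    using 1 2 3 by (intro gvs_add[OF gM] gvs_diff[OF gM] sgM_mem) auto
qed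

lemma phi_expand: "phi u v = (\<Sum>j\<in>UNIV. \<Sum>a\<in>UNIV. \<Sum>b\<in>UNIV. dh j a b (gproj G a u) (gproj G b v))"
  by (simp add: dCE1_def)

lemma phi_hom: "u \<in> G a \<Longrightarrow> v \<in> G b \<Longrightarrow> phi u v = dh False a b u v + dh True a b u v"
  unfolding phi_expand sum_bool by (cases a; cases b) (simp_all add: gp_hom_if[OF gL])

lemma phi_zero1[simp]: "phi 0 v = 0" unfolding phi_expand by (simp add: gp_zero[OF gL])
lemma phi_zero2[simp]: "phi u 0 = 0" unfolding phi_expand by (simp add: gp_zero[OF gL])

lemma dh_proj: "u \<in> G a \<Longrightarrow> v \<in> G b \<Longrightarrow> gproj GM c (dh j a b u v) = (if c = ((a \<noteq> b) \<noteq> j) then dh j a b u v else 0)"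
  by (rule gp_hom_if[OF gM dh_mem])

lemma cp2_phi: "u \<in> G a \<Longrightarrow> v \<in> G b \<Longrightarrow> cpart2 G GM j phi u v = dh j a b u v"
proof -
  assume u: "u \<in> G a" and v: "v \<in> G b"
  have "cpart2 G GM j phi u v = gproj GM ((a \<noteq> b) \<noteq> j) (phi u v)"
    unfolding cpart2_def sum_bool
    by (cases a; cases b) (simp_all add: gp_hom_if[OF gL u] gp_hom_if[OF gL v] gp_zero[OF gM])
  also have "\<dots> = dh j a b u v"
    unfolding phi_hom[OF u v] gp_add[OF gM] dh_proj[OF u v] by (cases j) auto
  finally show ?thesis .
qed

lemma phi_even: "u \<in> G False \<Longrightarrow> v \<in> G False \<Longrightarrow> phi u v = psi (br u v) - act u (psi v) + act v (psi u)"
proof -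
  assume u: "u \<in> G False" and v: "v \<in> G False"
  have "phi u v = (ps False (br u v) + ps True (br u v)) - (act u (ps False v) + act u (ps True v)) + (act v (ps False u) + act v (ps True u))"
    unfolding phi_hom[OF u v] dCE1_h_def by (simp add: algebra_simps)
  then show ?thesis by (simp only: act_add2[symmetric] cp1_sumj)
qed

end


context RS begin

lemma cp1_sg: "ps j (sg b x) = sg b (ps j x)" by (cases b) (simp_all add: cp1_neg)

lemma d2_key:
  assumes u: "u \<in> G a" and v: "v \<in> G b" and w: "w \<in> G c"
  shows "dCE2_h br act j a b c (cpart2 G GM j phi) u v w = 0"
proof -
  have uv: "br u v \<in> G (a \<noteq> b)" and uw: "br u w \<in> G (a \<noteq> c)" and vw: "br v w \<in> G (b \<noteq> c)"
    using br_grade u v w by blast+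
  have J1: "br u (br v w) = br (br u v) w + sg (a \<and> b) (br v (br u w))" using br_jac[OF u v w] .
  have A1: "br v (br u w) = - sg (b \<and> (a \<noteq> c)) (br (br u w) v)" using br_anti[OF v uw] .
  have M1: "act (br u v) m = act u (act v m) - sg (a \<and> b) (act v (act u m))" for m using act_br[OF u v] .
  have M2: "act (br u w) m = act u (act w m) - sg (a \<and> c) (act w (act u m))" for m using act_br[OF u w] .
  have M3: "act (br v w) m = act v (act w m) - sg (b \<and> c) (act w (act v m))" for m using act_br[OF v w] .
  have "dCE2_h br act j a b c (cpart2 G GM j phi) u v w =
     dh j (a \<noteq> b) c (br u v) w - sg (b \<and> c) (dh j (a \<noteq> c) b (br u w) v) - dh j a (b \<noteq> c) u (br v w)
     - sg (a \<and> j) (act u (dh j b c v w))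
     + sg (b \<and> (j \<noteq> a)) (act v (dh j a c u w))
     - sg (c \<and> ((j \<noteq> a) \<noteq> b)) (act w (dh j a b u v))"
    unfolding dCE2_h_def using u v w uv uw vw by (simp add: cp2_phi)
  also have "\<dots> = 0"
    unfolding dCE1_h_def J1 A1
    by (cases a; cases b; cases c; cases j)
       (simp_all add: M1 M2 M3 cp1_add cp1_neg cp1_diff act_add2 act_neg2 act_diff2 algebra_simps)
  finally show ?thesis .
qed

lemma d2_zero: "dCE2 G br GM act phi u v w = 0"
  unfolding dCE2_def
  by (intro sum.neutral ballI d2_key gp_mem[OF gL])

end


context RS begin

lemma sgM_scale: "sM c (sg b m) = sg b (sM c m)" by (cases b) (simp_all add: module.scale_minus_right[OF mM])
lemma sg_add: "sg b (x + y) = sg b x + sg b (y::'m)" by (cases b) simp_all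

lemma dh_add1: "dh j a b (u1 + u2) v = dh j a b u1 v + dh j a b u2 v"
  unfolding dCE1_h_def by (simp add: br_add1 cp1_add act_add1 act_add2 sg_add algebra_simps)
lemma dh_add2: "dh j a b u (v1 + v2) = dh j a b u v1 + dh j a b u v2"
  unfolding dCE1_h_def by (simp add: br_add2 cp1_add act_add1 act_add2 sg_add algebra_simps)
lemma dh_scale1: "dh j a b (sL c u) v = sM c (dh j a b u v)"
  unfolding dCE1_h_def
  by (simp add: br_scale1 cp1_scale act_scale1 act_scale2 sgM_scale module.scale_right_distrib[OF mM] module.scale_right_diff_distrib[OF mM])
lemma dh_scale2: "dh j a b u (sL c v) = sM c (dh j a b u v)"
  unfolding dCE1_h_def
  by (simp add: br_scale2 cp1_scale act_scale1 act_scale2 sgM_scale module.scale_right_distrib[OF mM] module.scale_right_diff_distrib[OF mM])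

lemma dh_anti: "x \<in> G a \<Longrightarrow> y \<in> G b \<Longrightarrow> dh j a b x y = - sg (a \<and> b) (dh j b a y x)"
  unfolding dCE1_h_def
  by (subst br_anti, assumption, assumption) (cases a; cases b; cases j; simp add: cp1_neg algebra_simps)

lemma phi_sab: "super_alt_bilinear sL G sM phi"
  unfolding super_alt_bilinear_def
proof (intro conjI allI ballI)
  fix x y z
  show "phi (x + y) z = phi x z + phi y z"
    unfolding phi_expand by (simp add: gp_add[OF gL] dh_add1 sum.distrib)
  show "phi z (x + y) = phi z x + phi z y"
    unfolding phi_expand by (simp add: gp_add[OF gL] dh_add2 sum.distrib)
next
  fix c x y
  show "phi (sL c x) y = sM c (phi x y)"
    unfolding phi_expand by (simp add: gp_scale[OF gL] dh_scale1 module.scale_sum_right[OF mM])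
  show "phi x (sL c y) = sM c (phi x y)"
    unfolding phi_expand by (simp add: gp_scale[OF gL] dh_scale2 module.scale_sum_right[OF mM])
next
  fix a b x y assume x: "x \<in> G a" and y: "y \<in> G b"
  show "phi x y = - sg (a \<and> b) (phi y x)"
    unfolding phi_hom[OF x y] phi_hom[OF y x] dh_anti[OF x y, of False] dh_anti[OF x y, of True]
    by (simp add: sg_add)
qed

lemma act_pow_scale2: "(act x ^^ n) (sM c m) = sM c ((act x ^^ n) m)"
  by (induction n) (simp_all add: act_scale2)

lemma act_pow_scale1: "(act (sL c x) ^^ n) m = sM (c ^ n) ((act x ^^ n) m)"
proof (induction n)
  case 0 then show ?case by (simp add: module.scale_one[OF mM])
next
  case (Suc n) then show ?case by (simp add: act_scale1 act_scale2 module.scale_scale[OF mM] mult.commute)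
qed

lemma ind1_scale: "x \<in> G False \<Longrightarrow> ind1 p pp act psi (sL c x) = sM (c ^ p) (ind1 p pp act psi x)"
proof -
  assume x: "x \<in> G False"
  have "(act (sL c x) ^^ (p - 1)) (psi (sL c x)) = sM (c ^ (p - 1) * c) ((act x ^^ (p - 1)) (psi x))"
    by (simp add: act_pow_scale1 psi_scale act_pow_scale2 module.scale_scale[OF mM] mult.commute)
  also have "c ^ (p - 1) * c = c ^ p" using p2 by (metis Suc_diff_1 gr_implies_not0 neq0_conv power_Suc2)
  finally show ?thesis unfolding ind1_def
    by (simp add: pp_scale[OF x] psi_scale module.scale_right_diff_distrib[OF mM])
qed

end


typedef (overloaded) ('a, 'b) bend = "{f :: ('a::ab_group_add \<times> 'b::field) \<Rightarrow> ('a \<times> 'b).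
   \<forall>x y. f (fst x + fst y, snd x + snd y) = (fst (f x) + fst (f y), snd (f x) + snd (f y))}"
  morphisms ap Abe
  by (rule exI[of _ id]) simp

setup_lifting type_definition_bend

instantiation bend :: (ab_group_add, field) ring_1
begin
lift_definition zero_bend :: "('a, 'b) bend" is "\<lambda>_. (0, 0)" by simp
lift_definition one_bend :: "('a, 'b) bend" is "\<lambda>x. x" by simp
lift_definition plus_bend :: "('a, 'b) bend \<Rightarrow> ('a, 'b) bend \<Rightarrow> ('a, 'b) bend"
  is "\<lambda>f g x. (fst (f x) + fst (g x), snd (f x) + snd (g x))" by (simp add: algebra_simps)
lift_definition uminus_bend :: "('a, 'b) bend \<Rightarrow> ('a, 'b) bend"
  is "\<lambda>f x. (- fst (f x), - snd (f x))" by simp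
lift_definition minus_bend :: "('a, 'b) bend \<Rightarrow> ('a, 'b) bend \<Rightarrow> ('a, 'b) bend"
  is "\<lambda>f g x. (fst (f x) - fst (g x), snd (f x) - snd (g x))" by (simp add: algebra_simps)
lift_definition times_bend :: "('a, 'b) bend \<Rightarrow> ('a, 'b) bend \<Rightarrow> ('a, 'b) bend"
  is "\<lambda>f g x. f (g x)"
  by (simp only: mem_Collect_eq)
instance
proof
  fix a b c :: "('a, 'b) bend"
  show "a + b + c = a + (b + c)" by transfer (simp add: add.assoc)
  show "a + b = b + a" by transfer (simp add: add.commute)
  show "0 + a = a" by transfer simp
  show "- a + a = 0" by transfer simp
  show "a - b = a + - b" by transfer simp
  show "a * b * c = a * (b * c)" by transfer simp
  show "1 * a = a" by transfer simp
  show "a * 1 = a" by transfer simp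
  show "(a + b) * c = a * c + b * c" by transfer simp
  show "a * (b + c) = a * b + a * c" by transfer (rule ext, blast)
  show "(0::('a, 'b) bend) \<noteq> 1"
  proof
    assume "(0::('a, 'b) bend) = 1"
    then have "ap (0::('a, 'b) bend) (0, 1) = ap 1 (0, 1)" by simp
    then show False by transfer simp
  qed
qed
end

lemma ap_plus: "ap (f + g) x = (fst (ap f x) + fst (ap g x), snd (ap f x) + snd (ap g x))" by transfer simp
lemma ap_minus: "ap (f - g) x = (fst (ap f x) - fst (ap g x), snd (ap f x) - snd (ap g x))" by transfer simp
lemma ap_uminus: "ap (- f) x = (- fst (ap f x), - snd (ap f x))" by transfer simp
lemma ap_times: "ap (f * g) x = ap f (ap g x)" by transfer simp
lemma ap_one: "ap 1 x = x" by transfer simp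
lemma ap_zero: "ap 0 x = (0, 0)" by transfer simp
lemma ap_add: "ap f (fst x + fst y, snd x + snd y) = (fst (ap f x) + fst (ap f y), snd (ap f x) + snd (ap f y))"
  by transfer simp
lemma ap_sum: "finite A \<Longrightarrow> ap (sum f A) x = ((\<Sum>i\<in>A. fst (ap (f i) x)), (\<Sum>i\<in>A. snd (ap (f i) x)))"
  by (induction A rule: finite_induct) (simp_all add: ap_zero ap_plus)

lemma Abe_inv: "(\<And>x y. f (fst x + fst y, snd x + snd y) = (fst (f x) + fst (f y), snd (f x) + snd (f y))) \<Longrightarrow> ap (Abe f) = f"
  by (rule Abe_inverse, simp only: mem_Collect_eq, blast)


lemma lin4: "(I::'a::ab_group_add) = a + b + P - (X + Y + V) \<Longrightarrow> A = P - V \<Longrightarrow> I = (a - X) + (b - Y) + A"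
proof -
  assume h1: "I = a + b + P - (X + Y + V)" and h2: "A = P - V"
  have P: "P = A + V" using h2 by simp
  have "a + b + (A + V) - (X + Y + V) = (a - X) + (b - Y) + A" by (simp add: algebra_simps)
  then show ?thesis using h1 P by simp
qed

lemma lin3: "(a::'a::ab_group_add) + P = c + d \<Longrightarrow> c + S = e \<Longrightarrow> a + (P + S) = d + e"
proof -
  assume h1: "a + P = c + d" and h2: "c + S = e"
  have "a + (P + S) = (c + d) + S" using h1 by (simp add: add.assoc[symmetric])
  also have "\<dots> = d + (c + S)" by (simp add: add_ac)
  finally show ?thesis using h2 by simp
qed

lemma acts_Suc: "acts act xs N (Suc k) m = act (xs N) (acts act xs (N - 1) k m)"
proof (induction k arbitrary: m)
  case 0 then show ?case by simp
next
  case (Suc k)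
  have "acts act xs N (Suc (Suc k)) m = acts act xs N (Suc k) (act (xs (N - Suc k)) m)" by simp
  also have "\<dots> = act (xs N) (acts act xs (N - 1) k (act (xs (N - Suc k)) m))" by (rule Suc.IH)
  also have "N - Suc k = N - 1 - k" by simp
  finally show ?case by simp
qed

context RS begin

lemma lnb_even: "(\<And>i. xs i \<in> G False) \<Longrightarrow> lnb br xs n \<in> G False"
  by (induction n) (use br_grade in fastforce)+

primrec VV :: "(nat \<Rightarrow> 'l) \<Rightarrow> (nat \<Rightarrow> 'm) \<Rightarrow> nat \<Rightarrow> 'm" where
  "VV xs vs 0 = vs 1"
| "VV xs vs (Suc n) = act (lnb br xs n) (vs (Suc (Suc n))) - act (xs (Suc (Suc n))) (VV xs vs n)"

lemma per_S:
  assumes ev: "\<And>i. xs i \<in> G False" and n: "n \<ge> 1"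
  shows "phi (lnb br xs (n - 1)) (xs (n + 1)) +
     (\<Sum>k\<in>{1..n - 1}. sM ((- 1) ^ k) (acts act xs (n + 1) k (phi (lnb br xs (n - 1 - k)) (xs (n + 1 - k)))))
     = psi (lnb br xs n) - VV xs (\<lambda>i. psi (xs i)) n"
  using n
proof (induction n rule: dec_induct)
  case base
  show ?case using ev by (simp add: phi_even)
next
  case (step n)
  let ?F = "\<lambda>n k. sM ((- 1) ^ k) (acts act xs (n + 1) k (phi (lnb br xs (n - 1 - k)) (xs (n + 1 - k))))"
  have sneg: "sM (- c) m = - sM c m" for c m by (simp add: module.scale_minus_left[OF mM])
  have "(\<Sum>k\<in>{1..Suc n - 1}. ?F (Suc n) k) = (\<Sum>k\<in>{0..n - 1}. ?F (Suc n) (Suc k))"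
    using step.hyps(1) sum.shift_bounds_cl_Suc_ivl[where g = "?F (Suc n)" and m = 0 and n = "n - 1"] by simp
  also have "\<dots> = (\<Sum>k\<in>{0..n - 1}. - act (xs (Suc (Suc n))) (?F n k))"
  proof (intro sum.cong refl)
    fix k assume k: "k \<in> {0..n - 1}"
    have e1: "Suc n - 1 - Suc k = n - 1 - k" and e2: "Suc n + 1 - Suc k = n + 1 - k" and e3: "Suc n + 1 - 1 = n + 1"
      using k step.hyps(1) by auto
    show "?F (Suc n) (Suc k) = - act (xs (Suc (Suc n))) (?F n k)"
      by (simp only: acts_Suc e1 e2 e3) (simp add: act_scale2 sneg)
  qed
  also have "\<dots> = - act (xs (Suc (Suc n))) (phi (lnb br xs (n - 1)) (xs (n + 1)) + (\<Sum>k\<in>{1..n - 1}. ?F n k))"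
  proof -
    have "{0..n - 1} = insert 0 {1..n - 1}" by auto
    then have "(\<Sum>k\<in>{0..n - 1}. ?F n k) = ?F n 0 + (\<Sum>k\<in>{1..n - 1}. ?F n k)" by simp
    then show ?thesis by (simp add: act_sum2[symmetric] sum_negf module.scale_one[OF mM])
  qed
  also have "\<dots> = - act (xs (Suc (Suc n))) (psi (lnb br xs n) - VV xs (\<lambda>i. psi (xs i)) n)"
    using step.IH by simp
  finally have S: "(\<Sum>k\<in>{1..Suc n - 1}. ?F (Suc n) k) = - act (xs (Suc (Suc n))) (psi (lnb br xs n) - VV xs (\<lambda>i. psi (xs i)) n)" .
  have "phi (lnb br xs (Suc n - 1)) (xs (Suc n + 1)) = psi (lnb br xs (Suc n)) - act (lnb br xs n) (psi (xs (Suc (Suc n)))) + act (xs (Suc (Suc n))) (psi (lnb br xs n))"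
    using lnb_even[OF ev, where n = n] ev by (simp add: phi_even)
  then show ?case using S by (simp add: act_diff2 algebra_simps) (erule lin3, assumption)
qed

definition bk :: "'l \<Rightarrow> 'm \<Rightarrow> ('m, 'k) bend" where
  "bk z v = Abe (\<lambda>mc. (act z (fst mc) + sM (snd mc) v, 0))"

lemma ap_bk: "ap (bk z v) mc = (act z (fst mc) + sM (snd mc) v, 0)"
  unfolding bk_def by (subst Abe_inv) (simp_all add: act_add2 module.scale_left_distrib[OF mM] add_ac)

lemma bend_eqI: "(\<And>x. ap f x = ap g x) \<Longrightarrow> f = g"
  by (metis ap_inject ext)

lemma bk_add: "bk z u + bk w v = bk (z + w) (u + v)"
  by (rule bend_eqI) (simp add: ap_plus ap_bk act_add1 module.scale_right_distrib[OF mM] add_ac)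

lemma bk_com: "z \<in> G a \<Longrightarrow> w \<in> G False \<Longrightarrow> com (bk z u) (bk w v) = bk (br z w) (act z v - act w u)"
  unfolding com_def
  by (rule bend_eqI)
     (simp add: ap_minus ap_times ap_bk act_add2 act_scale2 act_br[of z a w False]
       module.scale_zero_left[OF mM] module.scale_right_diff_distrib[OF mM] algebra_simps)

lemma act_pow_zero: "(act z ^^ n) 0 = 0" by (induction n) simp_all

lemma bk_pow: "ap (bk z v ^ Suc n) mc = ((act z ^^ Suc n) (fst mc) + sM (snd mc) ((act z ^^ n) v), 0)"
proof (induction n arbitrary: mc)
  case 0 then show ?case by (simp add: ap_bk)
next
  case (Suc n)
  have "bk z v ^ Suc (Suc n) = bk z v * bk z v ^ Suc n" by (rule power_Suc)
  then show ?case
    by (simp only: ap_times Suc.IH) (simp add: ap_bk act_add2 act_scale2 module.scale_zero_left[OF mM])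
qed

lemma ap_of_nat: "ap (of_nat n :: ('m, 'k) bend) mc = (sM (of_nat n) (fst mc), of_nat n * snd mc)"
proof (induction n)
  case 0 then show ?case by (simp add: ap_zero module.scale_zero_left[OF mM])
next
  case (Suc n)
  have e: "(of_nat (Suc n) :: ('m, 'k) bend) = 1 + of_nat n" by simp
  show ?case
    by (subst e, subst ap_plus, simp only: ap_one Suc.IH) (simp add: module.scale_left_distrib[OF mM] module.scale_one[OF mM] algebra_simps)
qed

lemma bend_char: "of_nat p = (0 :: ('m, 'k) bend)"
proof -
  have "of_nat p = (0::'k)" using char by (metis of_nat_CHAR)
  then show ?thesis by (intro bend_eqI) (simp add: ap_of_nat ap_zero module.scale_zero_left[OF mM])
qed

lemma lnb_bk: assumes ev: "\<And>i. xs i \<in> G False"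
  shows "lnb com (\<lambda>i. bk (xs i) (vs i)) n = bk (lnb br xs n) (VV xs vs n)"
proof (induction n)
  case 0 then show ?case by simp
next
  case (Suc n) then show ?case by (simp add: bk_com[OF lnb_even[OF ev] ev])
qed

lemma pseq_bk: "pseq (bk x u) (bk y v) S = (\<lambda>i. bk (pseq x y S i) (pseq u v S i))"
  by (rule ext) (simp add: pseq_def)

lemma pseq_psi: "pseq (psi x) (psi y) S = (\<lambda>i. psi (pseq x y S i))"
  by (rule ext) (simp add: pseq_def)

lemma pseq_even: "x \<in> G False \<Longrightarrow> y \<in> G False \<Longrightarrow> pseq x y S i \<in> G False"
  by (simp add: pseq_def)

definition ev :: "('m, 'k) bend \<Rightarrow> 'm" where "ev T = fst (ap T (0, 1))"

lemma ev_add: "ev (T + U) = ev T + ev U" by (simp add: ev_def ap_plus)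
lemma ev_sum: "finite A \<Longrightarrow> ev (sum f A) = (\<Sum>i\<in>A. ev (f i))" by (simp add: ev_def ap_sum)
lemma ev_bk: "ev (bk z v) = v" by (simp add: ev_def ap_bk module.scale_one[OF mM])
lemma ev_of_nat: "ev (of_nat n * T) = sM (of_nat n) (ev T)" by (simp add: ev_def ap_times ap_of_nat)
lemma ev_pow: "ev (bk z v ^ Suc n) = (act z ^^ n) v"
  by (simp only: ev_def bk_pow) (simp add: act_pow_zero module.scale_one[OF mM])

lemma ofnat_nz: "1 \<le> i \<Longrightarrow> i < p \<Longrightarrow> of_nat i \<noteq> (0::'k)"
  using char by (auto simp: of_nat_eq_0_iff_char_dvd dest: dvd_imp_le)

lemma jac_vec:
  assumes x: "x \<in> G False" and y: "y \<in> G False"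
  shows "(act (x + y) ^^ (p - 1)) (psi (x + y)) = (act x ^^ (p - 1)) (psi x) + (act y ^^ (p - 1)) (psi y)
     + (\<Sum>S\<in>Pow {3..p}. sM (inverse (of_nat (card S + 1))) (VV (pseq x y S) (\<lambda>i. psi (pseq x y S i)) (p - 1)))"
proof -
  define A where "A = bk x (psi x)"
  define B where "B = bk y (psi y)"
  define H where "H i = fps_nth (jZ A B ^ p) i" for i
  define W where "W S = VV (pseq x y S) (\<lambda>i. psi (pseq x y S i)) (p - 1)" for S
  have pS: "p = Suc (p - 1)" using p2 by simp
  have J: "(A + B)^p = A^p + B^p + (\<Sum>i\<in>{1..p-1}. H i)"
    unfolding H_def by (rule jacobson_sum) (use p2 in simp)
  have Hi: "ev (H i) = sM (inverse (of_nat i)) (\<Sum>S\<in>{S\<in>Pow {3..p}. card S = i - 1}. W S)" if i: "i \<in> {1..p-1}" for i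
  proof -
    have "of_nat i * H i = (\<Sum>S\<in>{S\<in>Pow {3..p}. card S = i - 1}. lnb com (pseq A B S) (p-1))"
      unfolding H_def by (rule jacobson_coeff[OF prime p2 bend_char]) (use i in simp)
    also have "\<dots> = (\<Sum>S\<in>{S\<in>Pow {3..p}. card S = i - 1}. bk (lnb br (pseq x y S) (p-1)) (W S))"
      unfolding A_def B_def pseq_bk W_def pseq_psi
      by (intro sum.cong refl lnb_bk pseq_even x y)
    finally have "sM (of_nat i) (ev (H i)) = (\<Sum>S\<in>{S\<in>Pow {3..p}. card S = i - 1}. W S)"
      by (simp add: ev_of_nat[symmetric] ev_sum ev_bk)
    then have "sM (inverse (of_nat i)) (sM (of_nat i) (ev (H i))) = sM (inverse (of_nat i)) (\<Sum>S\<in>{S\<in>Pow {3..p}. card S = i - 1}. W S)"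
      by simp
    moreover have "of_nat i \<noteq> (0::'k)" using i p2 ofnat_nz by auto
    ultimately show ?thesis by (simp add: module.scale_scale[OF mM] module.scale_one[OF mM])
  qed
  have grp: "(\<Sum>i\<in>{1..p-1}. sM (inverse (of_nat i)) (\<Sum>S\<in>{S\<in>Pow {3..p}. card S = i - 1}. W S))
       = (\<Sum>S\<in>Pow {3..p}. sM (inverse (of_nat (card S + 1))) (W S))"
  proof -
    have "(\<Sum>i\<in>{1..p-1}. sM (inverse (of_nat i)) (\<Sum>S\<in>{S\<in>Pow {3..p}. card S = i - 1}. W S))
        = (\<Sum>i\<in>{1..p-1}. \<Sum>S\<in>{S. S \<in> Pow {3..p} \<and> card S + 1 = i}. sM (inverse (of_nat (card S + 1))) (W S))"
    proof (intro sum.cong refl)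
      fix i assume i: "i \<in> {1..p-1}"
      have e: "{S\<in>Pow {3..p}. card S = i - 1} = {S. S \<in> Pow {3..p} \<and> card S + 1 = i}" using i by auto
      show "sM (inverse (of_nat i)) (\<Sum>S\<in>{S\<in>Pow {3..p}. card S = i - 1}. W S)
          = (\<Sum>S\<in>{S. S \<in> Pow {3..p} \<and> card S + 1 = i}. sM (inverse (of_nat (card S + 1))) (W S))"
        unfolding e module.scale_sum_right[OF mM] by (intro sum.cong refl) auto
    qed
    also have "\<dots> = (\<Sum>S\<in>Pow {3..p}. sM (inverse (of_nat (card S + 1))) (W S))"
    proof (rule sum.group)
      show "(\<lambda>S. card S + 1) ` Pow {3..p} \<subseteq> {1..p-1}"
      proof
        fix k assume "k \<in> (\<lambda>S. card S + 1) ` Pow {3..p}"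
        then obtain S where S: "S \<subseteq> {3..p}" "k = card S + 1" by auto
        have "card S \<le> card {3..p}" using S(1) by (intro card_mono) auto
        then show "k \<in> {1..p-1}" using S(2) p2 by auto
      qed
    qed auto
    finally show ?thesis .
  qed
  have "ev ((A + B)^p) = (act (x + y) ^^ (p - 1)) (psi (x + y))"
    unfolding A_def B_def bk_add psi_add by (subst pS) (simp only: ev_pow)
  moreover have "ev (A^p) = (act x ^^ (p - 1)) (psi x)" unfolding A_def by (subst pS) (simp only: ev_pow)
  moreover have "ev (B^p) = (act y ^^ (p - 1)) (psi y)" unfolding B_def by (subst pS) (simp only: ev_pow)
  moreover have "ev (\<Sum>i\<in>{1..p-1}. H i) = (\<Sum>S\<in>Pow {3..p}. sM (inverse (of_nat (card S + 1))) (W S))"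
  proof -
    have "ev (\<Sum>i\<in>{1..p-1}. H i) = (\<Sum>i\<in>{1..p-1}. ev (H i))" by (simp add: ev_sum)
    also have "\<dots> = (\<Sum>i\<in>{1..p-1}. sM (inverse (of_nat i)) (\<Sum>S\<in>{S\<in>Pow {3..p}. card S = i - 1}. W S))"
      by (rule sum.cong[OF refl Hi])
    also have "\<dots> = (\<Sum>S\<in>Pow {3..p}. sM (inverse (of_nat (card S + 1))) (W S))" by (rule grp)
    finally show ?thesis .
  qed
  ultimately show ?thesis using arg_cong[OF J, of ev] by (simp add: ev_add W_def)
qed

lemma per_S_p:
  assumes x: "x \<in> G False" and y: "y \<in> G False"
  shows "phi (lnb br (pseq x y S) (p - 2)) (pseq x y S p) +
     (\<Sum>k\<in>{1..p - 2}. sM ((- 1) ^ k) (acts act (pseq x y S) p k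
          (phi (lnb br (pseq x y S) (p - k - 2)) (pseq x y S (p - k)))))
     = psi (lnb br (pseq x y S) (p - 1)) - VV (pseq x y S) (\<lambda>i. psi (pseq x y S i)) (p - 1)"
proof -
  have e1: "p - 1 - 1 = p - 2" and e2: "p - 1 + 1 = p" using p2 by auto
  have e3: "p - 1 - 1 - k = p - k - 2" and e4: "p - 1 + 1 - k = p - k" for k using p2 by auto
  show ?thesis using per_S[of "pseq x y S" "p - 1"] pseq_even[OF x y] p2
    by (simp only: e1 e2 e3 e4) simp
qed

lemma compat: "compatible p sL G br sM act phi (ind1 p pp act psi)"
  unfolding compatible_def
proof (intro conjI allI ballI)
  fix c x assume "x \<in> G False"
  then show "ind1 p pp act psi (sL c x) = sM (c ^ p) (ind1 p pp act psi x)" by (rule ind1_scale)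
next
  fix x y assume x: "x \<in> G False" and y: "y \<in> G False"
  define c where "c S = inverse (of_nat (card S + 1) :: 'k)" for S :: "nat set"
  define P where "P S = psi (lnb br (pseq x y S) (p - 1))" for S
  define V where "V S = VV (pseq x y S) (\<lambda>i. psi (pseq x y S i)) (p - 1)" for S
  have comb: "(\<Sum>S\<in>Pow {3..p}. sM (c S) (phi (lnb br (pseq x y S) (p - 2)) (pseq x y S p)))
        + (\<Sum>S\<in>Pow {3..p}. sM (c S) (\<Sum>k\<in>{1..p - 2}. sM ((- 1) ^ k) (acts act (pseq x y S) p k
             (phi (lnb br (pseq x y S) (p - k - 2)) (pseq x y S (p - k))))))
      = (\<Sum>S\<in>Pow {3..p}. sM (c S) (P S)) - (\<Sum>S\<in>Pow {3..p}. sM (c S) (V S))"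
    unfolding sum.distrib[symmetric] sum_subtractf[symmetric]
    by (intro sum.cong refl)
       (simp only: module.scale_right_distrib[OF mM, symmetric] per_S_p[OF x y] P_def V_def
          module.scale_right_diff_distrib[OF mM])
  have H: "ind1 p pp act psi (x + y) = psi (pp x) + psi (pp y) + (\<Sum>S\<in>Pow {3..p}. sM (c S) (P S))
      - ((act x ^^ (p - 1)) (psi x) + (act y ^^ (p - 1)) (psi y) + (\<Sum>S\<in>Pow {3..p}. sM (c S) (V S)))"
    unfolding ind1_def jac_vec[OF x y] pp_add[OF x y]
    by (simp add: psi_add psi_sum psi_scale c_def P_def V_def)
  then show "ind1 p pp act psi (x + y) = ind1 p pp act psi x + ind1 p pp act psi y
        + (\<Sum>S\<in>Pow {3..p}. sM (inverse (of_nat (card S + 1))) (phi (lnb br (pseq x y S) (p - 2)) (pseq x y S p)))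
        + (\<Sum>S\<in>Pow {3..p}. sM (inverse (of_nat (card S + 1))) (\<Sum>k\<in>{1..p - 2}. sM ((- 1) ^ k) (acts act (pseq x y S) p k
             (phi (lnb br (pseq x y S) (p - k - 2)) (pseq x y S (p - k))))))"
    using lin4[OF H comb] unfolding c_def ind1_def by (simp only: add.assoc)
qed

end


context RS begin

lemma act_gp: assumes y: "y \<in> G False" shows "gproj GM b (act y m) = act y (gproj GM b m)"
proof (rule gp_eqI[OF gM])
  show "act y (gproj GM b m) \<in> GM b" using act_grade[OF y gp_mem[OF gM]] by simp
  have "act y m - act y (gproj GM b m) = act y (m - gproj GM b m)" by (simp add: act_diff2)
  then show "act y m - act y (gproj GM b m) \<in> GM (\<not> b)"
    using act_grade[OF y, of "m - gproj GM b m" "\<not> b"] gp_prop[OF gM] by simp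
qed

lemma actpow_gp: "y \<in> G False \<Longrightarrow> gproj GM b ((act y ^^ n) m) = (act y ^^ n) (gproj GM b m)"
  by (induction n) (simp_all add: act_gp)

lemma actpow_add: "(act y ^^ n) (m1 + m2) = (act y ^^ n) m1 + (act y ^^ n) m2"
  by (induction n) (simp_all add: act_add2)
lemma actpow_neg: "(act y ^^ n) (- m) = - (act y ^^ n) m"
  by (induction n) (simp_all add: act_neg2)
lemma actpow_diff: "(act y ^^ n) (m1 - m2) = (act y ^^ n) m1 - (act y ^^ n) m2"
  by (metis actpow_add actpow_neg diff_conv_add_uminus)
lemma actpow_sg: "(act y ^^ n) (sg b m) = sg b ((act y ^^ n) m)"
  by (cases b) (simp_all add: actpow_neg)
lemma actpow_sM: "(act y ^^ n) (sM c m) = sM c ((act y ^^ n) m)"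
  by (rule act_pow_scale2)

lemma zk_mem: "x \<in> G a \<Longrightarrow> y \<in> G False \<Longrightarrow> ((\<lambda>z. br z y) ^^ k) x \<in> G a"
  by (induction k) (use br_grade in fastforce)+

lemma zk_alt: assumes x: "x \<in> G a" and y: "y \<in> G False"
  shows "((\<lambda>z. br z y) ^^ k) x = (if even k then ((br y) ^^ k) x else - ((br y) ^^ k) x)"
proof (induction k)
  case 0 then show ?case by simp
next
  case (Suc k)
  have "((\<lambda>z. br z y) ^^ Suc k) x = - br y (((\<lambda>z. br z y) ^^ k) x)"
    using br_anti[OF zk_mem[OF x y, of k] y] by simp
  then show ?case using Suc by (auto simp: br_neg2)
qed

lemma zp: assumes x: "x \<in> G a" and y: "y \<in> G False"
  shows "((\<lambda>z. br z y) ^^ p) x = br x (pp y)"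
proof -
  have oddp: "odd p" using prime p2 prime_odd_nat by auto
  have "((\<lambda>z. br z y) ^^ p) x = - br (pp y) x" using zk_alt[OF x y, of p] oddp pp_ad[OF y, of x] by simp
  also have "\<dots> = br x (pp y)" using br_anti[OF pp_mem[OF y] x] by simp
  finally show ?thesis .
qed

lemma telesc: "(\<Sum>i<n. sM ((- 1) ^ i) (f i + f (Suc i))) = f 0 - sM ((- 1) ^ n) (f n)"
proof (induction n)
  case 0 then show ?case by (simp add: module.scale_one[OF mM])
next
  case (Suc n)
  then show ?case by (simp add: module.scale_right_distrib[OF mM] module.scale_minus_left[OF mM] algebra_simps)
qed

lemma bk0_pow: "ap (bk y 0 ^ n) (m, 0) = ((act y ^^ n) m, 0)"
proof (induction n arbitrary: m)
  case 0 then show ?case by (simp add: ap_one)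
next
  case (Suc n)
  have "bk y 0 ^ Suc n = bk y 0 ^ n * bk y 0" by (rule power_Suc2)
  then show ?case by (simp only: ap_times) (simp add: ap_bk Suc.IH module.scale_zero_right[OF mM] module.scale_zero_left[OF mM] funpow_swap1)
qed

lemma ap_neg1: "fst (ap ((- 1) ^ i * T) v) = sM ((- 1) ^ i) (fst (ap T v))"
  by (cases "even i") (simp_all add: module.scale_one[OF mM] module.scale_minus_left[OF mM] ap_times ap_uminus ap_one ap_zero)

lemma ap_bk0: "ap (bk z 0) (m, 0) = (act z m, 0)"
  by (simp add: ap_bk module.scale_zero_left[OF mM])

lemma T_ident:
  assumes x: "x \<in> G a" and y: "y \<in> G False"
  shows "(\<Sum>i<p. sM ((- 1) ^ i) ((act y ^^ i) (act (((\<lambda>z. br z y) ^^ (p - 1 - i)) x) m)))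
       = act x ((act y ^^ (p - 1)) m)"
proof -
  define Xb where "Xb = bk x 0"
  define Yb where "Yb = bk y 0"
  have Dk: "((\<lambda>w. w * Yb - Yb * w) ^^ k) Xb = bk (((\<lambda>z. br z y) ^^ k) x) 0" for k
  proof (induction k)
    case 0 then show ?case by (simp add: Xb_def)
  next
    case (Suc k)
    have "((\<lambda>w. w * Yb - Yb * w) ^^ Suc k) Xb = com (bk (((\<lambda>z. br z y) ^^ k) x) 0) (bk y 0)"
      using Suc by (simp add: com_def Yb_def)
    also have "\<dots> = bk (((\<lambda>z. br z y) ^^ Suc k) x) 0"
      by (simp add: bk_com[OF zk_mem[OF x y] y])
    finally show ?case .
  qed
  have S: "(\<Sum>i<p. (- 1) ^ i * (Yb ^ i * ((\<lambda>w. w * Yb - Yb * w) ^^ (p - 1 - i)) Xb)) = Xb * Yb ^ (p - 1)"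
    by (rule S2_ring[OF prime bend_char])
  have "fst (ap (\<Sum>i<p. (- 1) ^ i * (Yb ^ i * ((\<lambda>w. w * Yb - Yb * w) ^^ (p - 1 - i)) Xb)) (m, 0))
      = (\<Sum>i<p. sM ((- 1) ^ i) ((act y ^^ i) (act (((\<lambda>z. br z y) ^^ (p - 1 - i)) x) m)))"
    by (simp only: ap_sum[OF finite_lessThan] fst_conv ap_neg1 Dk, simp only: ap_times ap_bk0) (simp add: Yb_def bk0_pow)
  moreover have "fst (ap (Xb * Yb ^ (p - 1)) (m, 0)) = act x ((act y ^^ (p - 1)) m)"
    by (simp add: ap_times Yb_def bk0_pow Xb_def ap_bk0)
  ultimately show ?thesis using S by simp
qed

lemma sg_sum: "(\<Sum>i\<in>A. sg b (f i)) = sg b (\<Sum>i\<in>A. (f i :: 'm))"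
  by (cases b) (simp_all add: sum_negf)

lemma ind2h_zero:
  assumes x: "x \<in> G a" and y: "y \<in> G False"
  shows "ind2_h p br pp sM act j a (cpart2 G GM j phi) (\<lambda>z. gproj GM j (ind1 p pp act psi z)) x y = 0"
proof -
  define z where "z k = ((\<lambda>w. br w y) ^^ k) x" for k
  define s :: "'m \<Rightarrow> 'm" where "s = sg (a \<and> j)"
  define f where "f i = (act y ^^ i) (ps j (z (p - i)))" for i
  have oddp: "odd p" using prime p2 prime_odd_nat by auto
  have pS: "p = Suc (p - 1)" using p2 by simp
  have zm: "z k \<in> G a" for k unfolding z_def by (rule zk_mem[OF x y])
  have zS: "br (z k) y = z (Suc k)" for k unfolding z_def by simp
  have T1: "cpart2 G GM j phi x (pp y) = ps j (br x (pp y)) - s (act x (ps j (pp y))) + act (pp y) (ps j x)"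
    unfolding cp2_phi[OF x pp_mem[OF y]] dCE1_h_def s_def by simp
  have T2: "cpart2 G GM j phi (z (p - 1 - i)) y = ps j (z (p - i)) - s (act (z (p - 1 - i)) (ps j y)) + act y (ps j (z (p - 1 - i)))"
    if i: "i < p" for i
  proof -
    have "Suc (p - 1 - i) = p - i" using i by simp
    then show ?thesis unfolding cp2_phi[OF zm y] dCE1_h_def s_def zS by simp
  qed
  have T3: "gproj GM j (ind1 p pp act psi y) = ps j (pp y) - (act y ^^ (p - 1)) (ps j y)"
    unfolding ind1_def gp_diff[OF gM] actpow_gp[OF y] cp1_even[OF pp_mem[OF y]] cp1_even[OF y] ..
  have sumset: "{..p - 1} = {..<p}" using p2 by auto
  have "(\<Sum>i\<in>{..p - 1}. sM ((- 1) ^ i) ((act y ^^ i) (cpart2 G GM j phi (((\<lambda>z. br z y) ^^ (p - 1 - i)) x) y)))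
      = (\<Sum>i<p. sM ((- 1) ^ i) (f i + f (Suc i))) - s (\<Sum>i<p. sM ((- 1) ^ i) ((act y ^^ i) (act (z (p - 1 - i)) (ps j y))))"
  proof -
    have "(\<Sum>i\<in>{..p - 1}. sM ((- 1) ^ i) ((act y ^^ i) (cpart2 G GM j phi (((\<lambda>z. br z y) ^^ (p - 1 - i)) x) y)))
        = (\<Sum>i<p. sM ((- 1) ^ i) (f i + f (Suc i)) - s (sM ((- 1) ^ i) ((act y ^^ i) (act (z (p - 1 - i)) (ps j y)))))"
    proof (unfold sumset, intro sum.cong refl)
      fix i assume i: "i \<in> {..<p}"
      have e: "p - Suc i = p - 1 - i" by simp
      have "(act y ^^ i) (act y (ps j (z (p - 1 - i)))) = f (Suc i)" unfolding f_def e by (simp add: funpow_swap1)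
      then show "sM ((- 1) ^ i) ((act y ^^ i) (cpart2 G GM j phi (((\<lambda>z. br z y) ^^ (p - 1 - i)) x) y))
          = sM ((- 1) ^ i) (f i + f (Suc i)) - s (sM ((- 1) ^ i) ((act y ^^ i) (act (z (p - 1 - i)) (ps j y))))"
        using i unfolding z_def[symmetric] T2[OF i[simplified]]
        by (simp add: s_def actpow_add actpow_diff actpow_sg f_def sgM_scale[symmetric]
            module.scale_right_distrib[OF mM] module.scale_right_diff_distrib[OF mM] algebra_simps)
    qed
    then show ?thesis by (simp add: sum_subtractf s_def sg_sum)
  qed
  also have "(\<Sum>i<p. sM ((- 1) ^ i) (f i + f (Suc i))) = ps j (br x (pp y)) + act (pp y) (ps j x)"
  proof -
    have "f 0 = ps j (br x (pp y))" unfolding f_def z_def using zp[OF x y] by simp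
    moreover have "f p = act (pp y) (ps j x)" unfolding f_def z_def using act_pp[OF y] by simp
    ultimately show ?thesis unfolding telesc using oddp by (simp add: module.scale_minus_left[OF mM] module.scale_one[OF mM])
  qed
  also have "(\<Sum>i<p. sM ((- 1) ^ i) ((act y ^^ i) (act (z (p - 1 - i)) (ps j y)))) = act x ((act y ^^ (p - 1)) (ps j y))"
    unfolding z_def by (rule T_ident[OF x y])
  finally have SUM: "(\<Sum>i\<in>{..p - 1}. sM ((- 1) ^ i) ((act y ^^ i) (cpart2 G GM j phi (((\<lambda>z. br z y) ^^ (p - 1 - i)) x) y)))
      = ps j (br x (pp y)) + act (pp y) (ps j x) - s (act x ((act y ^^ (p - 1)) (ps j y)))" .
  show ?thesis
    unfolding ind2_h_def SUM T1 T3
    by (cases "a \<and> j") (auto simp: s_def act_diff2 conj_commute)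
qed

lemma ind2_zero: "y \<in> G False \<Longrightarrow> ind2 p G br pp sM GM act phi (ind1 p pp act psi) x y = 0"
  unfolding ind2_def by (intro sum.neutral ballI ind2h_zero gp_mem[OF gL])

end

theorem mainTheorem2:
  fixes p :: nat
    and sL :: "'k::field \<Rightarrow> 'l::ab_group_add \<Rightarrow> 'l" and G :: "bool \<Rightarrow> 'l set"
    and br :: "'l \<Rightarrow> 'l \<Rightarrow> 'l" and pp :: "'l \<Rightarrow> 'l"
    and sM :: "'k \<Rightarrow> 'm::ab_group_add \<Rightarrow> 'm" and GM :: "bool \<Rightarrow> 'm set"
    and act :: "'l \<Rightarrow> 'm \<Rightarrow> 'm" and psi :: "'l \<Rightarrow> 'm"
  assumes "CHAR('k) = p" and "prime p" and "p > 2"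
    and "restricted_lie_superalgebra p sL G br pp"
    and "restricted_module p sL G br pp sM GM act"
    and "Vector_Spaces.linear sL sM psi"
  shows "C2star p sL G br sM act (dCE1 G br GM act psi) (ind1 p pp act psi)
       \<and> (\<forall>u v w. dCE2 G br GM act (dCE1 G br GM act psi) u v w = 0)
       \<and> (\<forall>x. \<forall>y\<in>G False.
            ind2 p G br pp sM GM act (dCE1 G br GM act psi) (ind1 p pp act psi) x y = 0)"
proof -
  interpret RS p sL G br pp sM GM act psi by (rule RS.intro[OF assms])
  show ?thesis unfolding C2star_def using phi_sab compat d2_zero ind2_zero by blast
qed

end
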